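(* Let $N$ be a positive even integer and $M_t,M_r$ positive integers, $K_{\min}=\min(M_t,M_r)$, $K_{\max}=\max(M_t,M_r)$, and let $P_0>0$, $\sigma^2>0$, $\alpha\in\mathbb C\setminus\{0\}$, $L>0$, $\theta\in\mathbb R$. Let $\hat{\mathbf G}_t$, $\hat{\mathbf G}_r$ be the random matrices described in the context, and define the average optimal sensing SNRs $\overline{S}_1=\mathbb E\left[\max_{\mathbf\Phi}\frac{P_0|\alpha|^2L^2\|\hat{\mathbf G}_t^T\mathbf\Phi^T\mathbf a(\theta)\|^2\|\hat{\mathbf G}_r\mathbf\Phi^T\mathbf a(\theta)\|^2}{\sigma^2}\right]$ (fully-passive IRS) and $\overline{S}_2=\mathbb E\left[\max_{\mathbf\Phi}\frac{P_0|\alpha|^2LM_r\|\hat{\mathbf G}_t^T\mathbf\Phi^T\mathbf a(\theta)\|^2}{\sigma^2}\right]$ (semi-passive IRS), with maxima over all $\mathbf\Phi=\mathrm{diag}(e^{j\phi_1},\dots,e^{j\phi_N})$, $\phi_n\in\mathbb R$. If $N>\frac{2}{\pi}\sqrt{(M_t+M_r)^2+4\left(\frac{M_tM_r}{L}-K_{\min}K_{\max}\right)}-\frac{2(M_t+M_r)}{\pi}+1,$ then $\overline S_1>\overline S_2$.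
   Context: $j=\sqrt{-1}$. Fix $\hat d>0$, $\lambda>0$; $\mathbf a(\theta)\in\mathbb C^N$ has $n$-th entry $e^{j\pi(2n-N-1)\hat d\sin\theta/\lambda}$. Random channels: $\hat{\mathbf G}\in\mathbb C^{N\times K_{\min}}$, $\hat{\mathbf G}_t'\in\mathbb C^{N\times(M_t-K_{\min})}$, $\hat{\mathbf G}_r'\in\mathbb C^{(M_r-K_{\min})\times N}$ have all entries mutually independent circularly symmetric complex Gaussian with zero mean and unit variance; $\hat{\mathbf G}_t=[\hat{\mathbf G},\hat{\mathbf G}_t']$ and $\hat{\mathbf G}_r=\begin{bmatrix}\hat{\mathbf G}^T\\ \hat{\mathbf G}_r'\end{bmatrix}$. (These expressions are the sensing SNRs after optimal, maximum-ratio, transmit beamforming with power $P_0$, for BS-IRS channel $\sqrt L\hat{\mathbf G}_t$ and IRS-BS channel $\sqrt L\hat{\mathbf G}_r$.) *)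

theory Defs
  imports "HOL-Probability.Probability"
begin

text \<open>Circularly symmetric complex Gaussian, zero mean, unit variance:
  density (1/pi) exp(-|z|^2) w.r.t. Lebesgue measure on the complex plane.\<close>
definition cgauss :: "complex measure" where
  "cgauss = density lborel (\<lambda>z. ennreal (exp (- (cmod z)\<^sup>2) / pi))"

text \<open>Steering vector a(theta); index n = 0..N-1 corresponds to the paper's n+1.\<close>
definition steer :: "real \<Rightarrow> real \<Rightarrow> nat \<Rightarrow> real \<Rightarrow> nat \<Rightarrow> complex" where
  "steer d lam N \<theta> n =
     exp (\<i> * complex_of_real (pi * (2 * real (n + 1) - real N - 1) * d * sin \<theta> / lam))"

text \<open>Index set of all independent Gaussian entries:
  tag 0: entries (n,k) of G (N x Kmin); tag 1: entries (n,k) of G_t' (N x (Mt-Kmin));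
  tag 2: entries (m,n) of G_r' ((Mr-Kmin) x N).\<close>
definition chan_index :: "nat \<Rightarrow> nat \<Rightarrow> nat \<Rightarrow> (nat \<times> nat \<times> nat) set" where
  "chan_index N Mt Mr =
     ({0} \<times> {..<N} \<times> {..<min Mt Mr}) \<union>
     ({1} \<times> {..<N} \<times> {..<Mt - min Mt Mr}) \<union>
     ({2} \<times> {..<Mr - min Mt Mr} \<times> {..<N})"

definition chan_measure :: "nat \<Rightarrow> nat \<Rightarrow> nat \<Rightarrow> (nat \<times> nat \<times> nat \<Rightarrow> complex) measure" where
  "chan_measure N Mt Mr = PiM (chan_index N Mt Mr) (\<lambda>_. cgauss)"

text \<open>G_t = [G, G_t'] (N x Mt), entry (n,k).\<close>
definition Gt :: "nat \<Rightarrow> nat \<Rightarrow> (nat \<times> nat \<times> nat \<Rightarrow> complex) \<Rightarrow> nat \<Rightarrow> nat \<Rightarrow> complex" where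
  "Gt Mt Mr z n k = (if k < min Mt Mr then z (0, n, k) else z (1, n, k - min Mt Mr))"

text \<open>G_r = [G^T; G_r'] (Mr x N), entry (m,n).\<close>
definition Gr :: "nat \<Rightarrow> nat \<Rightarrow> (nat \<times> nat \<times> nat \<Rightarrow> complex) \<Rightarrow> nat \<Rightarrow> nat \<Rightarrow> complex" where
  "Gr Mt Mr z m n = (if m < min Mt Mr then z (0, n, m) else z (2, m - min Mt Mr, n))"

definition tx_gain :: "real \<Rightarrow> real \<Rightarrow> nat \<Rightarrow> nat \<Rightarrow> nat \<Rightarrow> real
    \<Rightarrow> (nat \<times> nat \<times> nat \<Rightarrow> complex) \<Rightarrow> (nat \<Rightarrow> real) \<Rightarrow> real" where
  "tx_gain d lam N Mt Mr \<theta> z \<phi> =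
     (\<Sum>k<Mt. (cmod (\<Sum>n<N. Gt Mt Mr z n k * exp (\<i> * complex_of_real (\<phi> n)) * steer d lam N \<theta> n))\<^sup>2)"

definition rx_gain :: "real \<Rightarrow> real \<Rightarrow> nat \<Rightarrow> nat \<Rightarrow> nat \<Rightarrow> real
    \<Rightarrow> (nat \<times> nat \<times> nat \<Rightarrow> complex) \<Rightarrow> (nat \<Rightarrow> real) \<Rightarrow> real" where
  "rx_gain d lam N Mt Mr \<theta> z \<phi> =
     (\<Sum>m<Mr. (cmod (\<Sum>n<N. Gr Mt Mr z m n * exp (\<i> * complex_of_real (\<phi> n)) * steer d lam N \<theta> n))\<^sup>2)"

definition avg_snr_fully_passive :: "real \<Rightarrow> real \<Rightarrow> nat \<Rightarrow> nat \<Rightarrow> nat \<Rightarrow> real \<Rightarrow> real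
    \<Rightarrow> complex \<Rightarrow> real \<Rightarrow> real \<Rightarrow> real" where
  "avg_snr_fully_passive d lam N Mt Mr P0 \<sigma>2 \<alpha> L \<theta> =
     (\<integral>z. (SUP \<phi>::nat \<Rightarrow> real. P0 * (cmod \<alpha>)\<^sup>2 * L\<^sup>2 * tx_gain d lam N Mt Mr \<theta> z \<phi>
              * rx_gain d lam N Mt Mr \<theta> z \<phi> / \<sigma>2) \<partial>chan_measure N Mt Mr)"

definition avg_snr_semi_passive :: "real \<Rightarrow> real \<Rightarrow> nat \<Rightarrow> nat \<Rightarrow> nat \<Rightarrow> real \<Rightarrow> real
    \<Rightarrow> complex \<Rightarrow> real \<Rightarrow> real \<Rightarrow> real" where
  "avg_snr_semi_passive d lam N Mt Mr P0 \<sigma>2 \<alpha> L \<theta> =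
     (\<integral>z. (SUP \<phi>::nat \<Rightarrow> real. P0 * (cmod \<alpha>)\<^sup>2 * L * real Mr
              * tx_gain d lam N Mt Mr \<theta> z \<phi> / \<sigma>2) \<partial>chan_measure N Mt Mr)"

end

theory Submission
  imports Defs
begin


definition Cx :: "real \<times> real \<Rightarrow> complex" where "Cx p = Complex (fst p) (snd p)"

lemma Cx_measurable[measurable]: "Cx \<in> borel_measurable (lborel \<Otimes>\<^sub>M lborel)"
proof -
  have "Cx = (\<lambda>p. complex_of_real (fst p) + \<i> * complex_of_real (snd p))"
    by (auto simp: Cx_def fun_eq_iff Complex_eq)
  moreover have "continuous_on UNIV (\<lambda>p. complex_of_real (fst p) + \<i> * complex_of_real (snd p))"
    by (intro continuous_intros)
  ultimately have "Cx \<in> borel_measurable borel"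
    by (metis borel_measurable_continuous_onI)
  then show ?thesis by (simp add: lborel_prod)
qed

lemma lborel_complex: "distr (lborel \<Otimes>\<^sub>M lborel) borel Cx = (lborel :: complex measure)"
proof (rule lborel_eqI[symmetric])
  fix l u :: complex assume lu: "\<And>b. b \<in> Basis \<Longrightarrow> l \<bullet> b \<le> u \<bullet> b"
  have pre: "Cx -` box l u \<inter> space (lborel \<Otimes>\<^sub>M lborel) = {Re l<..<Re u} \<times> {Im l<..<Im u}"
    by (auto simp: Cx_def box_def Basis_complex_def space_pair_measure inner_complex_def)
  have "Re l \<le> Re u" "Im l \<le> Im u" using lu[of 1] lu[of \<i>]
    by (auto simp: Basis_complex_def inner_complex_def)
  then show "emeasure (distr (lborel \<Otimes>\<^sub>M lborel) borel Cx) (box l u) = (\<Prod>b\<in>Basis. (u - l) \<bullet> b)"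
    by (simp add: emeasure_distr pre lborel.emeasure_pair_measure_Times Basis_complex_def
        inner_complex_def ennreal_mult)
qed simp

definition nd :: "real \<Rightarrow> real" where "nd x = exp (- x\<^sup>2) / sqrt pi"

lemma nd_normal: "nd = normal_density 0 (sqrt (1/2))"
proof -
  have "(sqrt (1/2::real))\<^sup>2 = 1/2" by simp
  then show ?thesis by (auto simp: fun_eq_iff nd_def normal_density_def)
qed

definition NG :: "real measure" where "NG = density lborel nd"

lemma prob_NG: "prob_space NG"
  unfolding NG_def nd_normal by (rule prob_space_normal_density) simp

interpretation NG: prob_space NG by (rule prob_NG)

lemma sets_NG[measurable_cong, simp]: "sets NG = sets borel"
  by (simp add: NG_def)

lemma nd_meas[measurable]: "nd \<in> borel_measurable borel"
  unfolding nd_def[abs_def] by measurable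

lemma nd_nonneg: "0 \<le> nd x" by (simp add: nd_def)

lemma cgauss_eq: "cgauss = distr (NG \<Otimes>\<^sub>M NG) borel Cx"
proof -
  have sf: "sigma_finite_measure (density lborel (\<lambda>x. ennreal (nd x)))"
    using prob_NG unfolding NG_def
    by (simp add: prob_space_imp_sigma_finite)
  have pd: "NG \<Otimes>\<^sub>M NG = density (lborel \<Otimes>\<^sub>M lborel) (\<lambda>(x,y). ennreal (nd x) * ennreal (nd y))"
    unfolding NG_def by (rule pair_measure_density) (auto simp: sf lborel.sigma_finite_measure_axioms)
  have eq: "ennreal (exp (- (cmod (Cx p))\<^sup>2) / pi) = (case p of (x,y) \<Rightarrow> ennreal (nd x) * ennreal (nd y))" for p
  proof -
    obtain x y where p: "p = (x,y)" by (cases p)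
    have "exp (- (cmod (Cx p))\<^sup>2) / pi = nd x * nd y"
      by (simp add: p Cx_def nd_def cmod_power2 exp_add[symmetric] field_simps)
    then show ?thesis by (simp add: p ennreal_mult nd_nonneg)
  qed
  have "cgauss = density (distr (lborel \<Otimes>\<^sub>M lborel) borel Cx) (\<lambda>z. ennreal (exp (- (cmod z)\<^sup>2) / pi))"
    unfolding cgauss_def lborel_complex ..
  also have "\<dots> = distr (density (lborel \<Otimes>\<^sub>M lborel) (\<lambda>p. ennreal (exp (- (cmod (Cx p))\<^sup>2) / pi))) borel Cx"
    by (rule density_distr) auto
  also have "\<dots> = distr (NG \<Otimes>\<^sub>M NG) borel Cx"
    unfolding pd eq ..
  finally show ?thesis .
qed

lemma sets_cgauss[measurable_cong, simp]: "sets cgauss = sets borel"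
  by (simp add: cgauss_def)

lemma space_cgauss[simp]: "space cgauss = UNIV"
  by (simp add: cgauss_def)

interpretation NN: pair_prob_space NG NG ..

lemma prob_cgauss: "prob_space cgauss"
  unfolding cgauss_eq by (rule NN.prob_space_distr) simp

interpretation CG: prob_space cgauss by (rule prob_cgauss)

lemma distr_Re: "distr cgauss borel Re = NG"
proof -
  have "distr cgauss borel Re = distr (NG \<Otimes>\<^sub>M NG) borel (Re \<circ> Cx)"
    unfolding cgauss_eq by (subst distr_distr) auto
  also have "\<dots> = distr (NG \<Otimes>\<^sub>M NG) NG fst"
    by (rule distr_cong) (auto simp: Cx_def)
  also have "\<dots> = NG" by (rule NG.distr_pair_fst)
  finally show ?thesis .
qed

lemma distr_Im: "distr cgauss borel Im = NG"
proof -
  have "distr cgauss borel Im = distr (NG \<Otimes>\<^sub>M NG) borel (Im \<circ> Cx)"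
    unfolding cgauss_eq by (subst distr_distr) auto
  also have "\<dots> = distr (distr (NG \<Otimes>\<^sub>M NG) (NG \<Otimes>\<^sub>M NG) (\<lambda>(x, y). (y, x))) borel (Im \<circ> Cx)"
    by (subst NN.distr_pair_swap[symmetric]) simp
  also have "\<dots> = distr (NG \<Otimes>\<^sub>M NG) borel ((Im \<circ> Cx) \<circ> (\<lambda>(x, y). (y, x)))"
    by (subst distr_distr) auto
  also have "\<dots> = distr (NG \<Otimes>\<^sub>M NG) NG fst"
    by (rule distr_cong) (auto simp: Cx_def)
  also have "\<dots> = NG" by (rule NG.distr_pair_fst)
  finally show ?thesis .
qed

lemma NG_hbi: fixes f :: "real \<Rightarrow> real" shows "has_bochner_integral lborel (\<lambda>x. nd x * f x) c \<Longrightarrow> f \<in> borel_measurable borel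
   \<Longrightarrow> integrable NG f \<and> integral\<^sup>L NG f = c"
proof -
  assume h: "has_bochner_integral lborel (\<lambda>x. nd x * f x) c" and [measurable]: "f \<in> borel_measurable borel"
  have "integrable lborel (\<lambda>x. nd x * f x)" using h by (simp add: has_bochner_integral_iff)
  moreover have "integral\<^sup>L lborel (\<lambda>x. nd x * f x) = c" using h by (rule has_bochner_integral_integral_eq)
  ultimately show ?thesis unfolding NG_def
    by (subst integrable_density, simp, simp, simp add: nd_nonneg,
      subst integral_density, simp, simp, simp add: nd_nonneg) simp
qed

lemma NG_1: "integrable NG (\<lambda>x. x) \<and> integral\<^sup>L NG (\<lambda>x. x) = 0"
  using normal_moment_odd[where k=0 and \<mu>=0 and \<sigma>="sqrt(1/2)"]
  by (intro NG_hbi) (auto simp: nd_normal)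

lemma NG_2: "integrable NG (\<lambda>x. x\<^sup>2) \<and> integral\<^sup>L NG (\<lambda>x. x\<^sup>2) = 1/2"
  using normal_moment_even[where k=1 and \<mu>=0 and \<sigma>="sqrt(1/2)"]
  by (intro NG_hbi) (auto simp: nd_normal)

lemma NG_abs: "integrable NG abs \<and> integral\<^sup>L NG abs = 1 / sqrt pi"
proof -
  have "sqrt (1/2) * sqrt (2 / pi) = 1 / sqrt pi"
    by (simp add: real_sqrt_mult[symmetric] real_sqrt_divide)
  then show ?thesis
  using normal_moment_abs_odd[where k=0 and \<mu>=0 and \<sigma>="sqrt(1/2)"]
  by (intro NG_hbi) (auto simp: nd_normal)
qed

lemma NG_4: "integrable NG (\<lambda>x. x^4)"
proof -
  have "integrable lborel (\<lambda>x. nd x * (x - 0)^4)"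
    unfolding nd_normal by (rule integrable_normal_moment) simp
  then show ?thesis unfolding NG_def
    by (subst integrable_density) (auto simp: nd_nonneg)
qed

lemma CG_Re: fixes h :: "real \<Rightarrow> real" shows "h \<in> borel_measurable borel \<Longrightarrow> integrable NG h \<Longrightarrow>
   integrable cgauss (\<lambda>z. h (Re z)) \<and> integral\<^sup>L cgauss (\<lambda>z. h (Re z)) = integral\<^sup>L NG h"
proof -
  assume h[measurable]: "h \<in> borel_measurable borel" and i: "integrable NG h"
  have m: "Re \<in> measurable cgauss borel" by simp
  show ?thesis
    using integrable_distr_eq[OF m h] integral_distr[OF m h] i unfolding distr_Re by simp
qed

lemma CG_Im: fixes h :: "real \<Rightarrow> real" shows "h \<in> borel_measurable borel \<Longrightarrow> integrable NG h \<Longrightarrow>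
   integrable cgauss (\<lambda>z. h (Im z)) \<and> integral\<^sup>L cgauss (\<lambda>z. h (Im z)) = integral\<^sup>L NG h"
proof -
  assume h[measurable]: "h \<in> borel_measurable borel" and i: "integrable NG h"
  have m: "Im \<in> measurable cgauss borel" by simp
  show ?thesis
    using integrable_distr_eq[OF m h] integral_distr[OF m h] i unfolding distr_Im by simp
qed

lemma CG_sq: "integrable cgauss (\<lambda>z. (cmod z)\<^sup>2) \<and> integral\<^sup>L cgauss (\<lambda>z. (cmod z)\<^sup>2) = 1"
proof -
  have r: "integrable cgauss (\<lambda>z. (Re z)\<^sup>2)" "integral\<^sup>L cgauss (\<lambda>z. (Re z)\<^sup>2) = 1/2"
    using CG_Re[of "\<lambda>x. x\<^sup>2"] NG_2 by auto
  have i: "integrable cgauss (\<lambda>z. (Im z)\<^sup>2)" "integral\<^sup>L cgauss (\<lambda>z. (Im z)\<^sup>2) = 1/2"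
    using CG_Im[of "\<lambda>x. x\<^sup>2"] NG_2 by auto
  have e: "(\<lambda>z. (cmod z)\<^sup>2) = (\<lambda>z. (Re z)\<^sup>2 + (Im z)\<^sup>2)" by (simp add: cmod_power2)
  show ?thesis unfolding e using r i by simp
qed

lemma CG_z: "integrable cgauss (\<lambda>z. z) \<and> integral\<^sup>L cgauss (\<lambda>z. z) = 0"
proof -
  have m: "(\<lambda>x::real. x) \<in> borel_measurable borel" by simp
  note r0 = CG_Re[OF m conjunct1[OF NG_1]] and i0 = CG_Im[OF m conjunct1[OF NG_1]]
  have r: "integrable cgauss (\<lambda>z. Re z)" "integral\<^sup>L cgauss (\<lambda>z. Re z) = 0"
    using conjunct1[OF r0] trans[OF conjunct2[OF r0] conjunct2[OF NG_1]] by simp_all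
  have i: "integrable cgauss (\<lambda>z. Im z)" "integral\<^sup>L cgauss (\<lambda>z. Im z) = 0"
    using conjunct1[OF i0] trans[OF conjunct2[OF i0] conjunct2[OF NG_1]] by simp_all
  have e: "(\<lambda>z. z) = (\<lambda>z. complex_of_real (Re z) + \<i> * complex_of_real (Im z))"
    by (auto simp: complex_eq_iff)
  show ?thesis unfolding e using r i by simp
qed

lemma CG_abs_int: "integrable cgauss cmod"
proof (rule Bochner_Integration.integrable_bound)
  show "integrable cgauss (\<lambda>z. \<bar>Re z\<bar> + \<bar>Im z\<bar>)"
    using CG_Re[of abs] CG_Im[of abs] NG_abs by auto
  show "AE z in cgauss. norm (cmod z) \<le> norm (\<bar>Re z\<bar> + \<bar>Im z\<bar>)"
    by (auto simp: cmod_le)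
qed simp

lemma CG_UNIV[simp]: "measure cgauss UNIV = 1"
  using CG.prob_space by simp

definition m1 :: real where "m1 = integral\<^sup>L cgauss cmod"

lemma m1_lower: "2 / pi \<le> m1\<^sup>2"
proof -
  have ia: "integrable cgauss (\<lambda>z. \<bar>Re z\<bar> + \<bar>Im z\<bar>)"
     and ie: "integral\<^sup>L cgauss (\<lambda>z. \<bar>Re z\<bar> + \<bar>Im z\<bar>) = 2 / sqrt pi"
    using CG_Re[of abs] CG_Im[of abs] NG_abs by auto
  have le: "\<bar>Re z\<bar> + \<bar>Im z\<bar> \<le> sqrt 2 * cmod z" for z
  proof -
    have "(\<bar>Re z\<bar> + \<bar>Im z\<bar>)\<^sup>2 \<le> 2 * ((Re z)\<^sup>2 + (Im z)\<^sup>2)"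
    proof -
      have "(\<bar>Re z\<bar> + \<bar>Im z\<bar>)\<^sup>2 + (\<bar>Re z\<bar> - \<bar>Im z\<bar>)\<^sup>2 = 2 * ((Re z)\<^sup>2 + (Im z)\<^sup>2)"
        by (simp add: power2_eq_square algebra_simps)
      moreover have "0 \<le> (\<bar>Re z\<bar> - \<bar>Im z\<bar>)\<^sup>2" by simp
      ultimately show ?thesis by linarith
    qed
    then have "\<bar>Re z\<bar> + \<bar>Im z\<bar> \<le> sqrt (2 * ((Re z)\<^sup>2 + (Im z)\<^sup>2))"
      by (rule real_le_rsqrt)
    then show ?thesis unfolding cmod_def real_sqrt_mult .
  qed
  have "2 / sqrt pi \<le> integral\<^sup>L cgauss (\<lambda>z. sqrt 2 * cmod z)"
    unfolding ie[symmetric] by (rule integral_mono[OF ia]) (auto intro: CG_abs_int le)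
  also have "\<dots> = sqrt 2 * m1" by (simp add: m1_def)
  finally have h: "2 / sqrt pi \<le> sqrt 2 * m1" .
  have "0 \<le> 2 / sqrt pi" by simp
  with h have "(2 / sqrt pi)\<^sup>2 \<le> (sqrt 2 * m1)\<^sup>2" by (rule power_mono)
  then show ?thesis by (simp add: power_mult_distrib power_divide)
qed

lemma m1_nonneg: "0 \<le> m1"
  unfolding m1_def by simp

lemma m1_upper: "m1\<^sup>2 \<le> 1"
proof -
  have i2: "integrable cgauss (\<lambda>z. (cmod z)\<^sup>2)" "integral\<^sup>L cgauss (\<lambda>z. (cmod z)\<^sup>2) = 1"
    using CG_sq by auto
  have e: "(\<lambda>z. (cmod z - m1)\<^sup>2) = (\<lambda>z. (cmod z)\<^sup>2 - 2 * m1 * cmod z + m1\<^sup>2)"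
    by (auto simp: fun_eq_iff power2_eq_square algebra_simps)
  have "0 \<le> integral\<^sup>L cgauss (\<lambda>z. (cmod z - m1)\<^sup>2)" by simp
  also have "\<dots> = 1 - 2 * m1 * m1 + m1\<^sup>2"
    unfolding e using i2 CG_abs_int by (simp add: m1_def)
  finally show ?thesis by (simp add: power2_eq_square)
qed

lemma CG_4: "integrable cgauss (\<lambda>z. (cmod z)^4)"
proof (rule Bochner_Integration.integrable_bound)
  show "integrable cgauss (\<lambda>z. 2 * ((Re z)^4 + (Im z)^4))"
    using CG_Re[of "\<lambda>x. x^4"] CG_Im[of "\<lambda>x. x^4"] NG_4 by auto
  show "AE z in cgauss. norm ((cmod z)^4) \<le> norm (2 * ((Re z)^4 + (Im z)^4))"
  proof (intro AE_I2)
    fix z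
    have "(cmod z)^4 = ((cmod z)^2)^2" using power_mult[of "cmod z" 2 2] by simp
    also have "\<dots> = ((Re z)\<^sup>2 + (Im z)\<^sup>2)\<^sup>2" by (simp add: cmod_power2)
    also have "\<dots> \<le> 2 * ((Re z)^4 + (Im z)^4)"
    proof -
      have "((Re z)\<^sup>2 + (Im z)\<^sup>2)\<^sup>2 + ((Re z)\<^sup>2 - (Im z)\<^sup>2)\<^sup>2 = 2 * ((Re z)^4 + (Im z)^4)"
        by (simp add: power2_eq_square algebra_simps eval_nat_numeral)
      moreover have "0 \<le> ((Re z)\<^sup>2 - (Im z)\<^sup>2)\<^sup>2" by simp
      ultimately show ?thesis by linarith
    qed
    finally show "norm ((cmod z)^4) \<le> norm (2 * ((Re z)^4 + (Im z)^4))" by simp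
  qed
qed simp



abbreviation PM :: "'i set \<Rightarrow> ('i \<Rightarrow> complex) measure" where
  "PM K \<equiv> PiM K (\<lambda>_. cgauss)"

lemma PM_prob: "prob_space (PM K)"
  by (rule prob_space_PiM) (rule prob_cgauss)

lemma PM_space: "space (PM K) = PiE K (\<lambda>_. UNIV)"
  by (simp add: space_PiM)

lemma PM_coord: "i \<in> K \<Longrightarrow> (\<lambda>y. y i) \<in> borel_measurable (PM K)"
proof -
  assume "i \<in> K"
  then have "(\<lambda>y. y i) \<in> measurable (PM K) cgauss" by (rule measurable_component_singleton)
  moreover have e: "measurable (PM K) cgauss = measurable (PM K) borel"
    by (rule measurable_cong_sets[OF refl sets_cgauss])
  ultimately show ?thesis by (simp only: e)
qed

lemma PM_coord_all[measurable]: "(\<lambda>y. y i) \<in> borel_measurable (PM K)"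
proof (cases "i \<in> K")
  case True then show ?thesis by (rule PM_coord)
next
  case False
  have "(\<lambda>y. y i) \<in> borel_measurable (PM K) \<longleftrightarrow> (\<lambda>y. undefined :: complex) \<in> borel_measurable (PM K)"
    by (rule Sigma_Algebra.measurable_cong) (use False in \<open>auto simp: space_PiM PiE_def extensional_def\<close>)
  then show ?thesis by simp
qed

lemma PM_comp:
  fixes h :: "complex \<Rightarrow> 'b::{banach, second_countable_topology}"
  assumes i: "i \<in> K" and hm0: "h \<in> borel_measurable borel" and hi: "integrable cgauss h"
  shows "integrable (PM K) (\<lambda>x. h (x i)) \<and> integral\<^sup>L (PM K) (\<lambda>x. h (x i)) = integral\<^sup>L cgauss h"
proof -
  have d: "distr (PM K) cgauss (\<lambda>x. x i) = cgauss"
    by (rule distr_PiM_component) (auto simp: prob_cgauss i)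
  have m: "(\<lambda>x. x i) \<in> measurable (PM K) cgauss" using i by (rule measurable_component_singleton)
  have e: "measurable cgauss borel = measurable borel borel"
    by (rule measurable_cong_sets[OF sets_cgauss refl])
  have hm: "h \<in> borel_measurable cgauss" using hm0 unfolding e .
  show ?thesis using integrable_distr_eq[OF m hm] integral_distr[OF m hm] hi unfolding d by simp
qed

lemma PM_indep:
  fixes F G :: "('i \<Rightarrow> complex) \<Rightarrow> 'b::{real_normed_field, banach, second_countable_topology}"
  assumes K: "finite K" "K \<noteq> {}" and AB: "A \<inter> B = {}" "A \<subseteq> K" "B \<subseteq> K"
   and Fm: "F \<in> borel_measurable (PM A)" and Gm: "G \<in> borel_measurable (PM B)"
   and Fr: "\<And>x. F (restrict x A) = F x" and Gr: "\<And>x. G (restrict x B) = G x"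
   and Fi: "integrable (PM K) F" and Gi: "integrable (PM K) G"
  shows "integrable (PM K) (\<lambda>x. F x * G x) \<and>
     integral\<^sup>L (PM K) (\<lambda>x. F x * G x) = integral\<^sup>L (PM K) F * integral\<^sup>L (PM K) G"
proof -
  interpret P: prob_space "PM K" by (rule PM_prob)
  have rv: "\<And>i. i \<in> K \<Longrightarrow> P.random_variable cgauss (\<lambda>x. x i)"
    by (rule measurable_component_singleton)
  have "distr (PM K) (PM K) (\<lambda>x. \<lambda>i\<in>K. x i) = distr (PM K) (PM K) (\<lambda>x. x)"
    by (rule distr_cong) (auto simp: space_PiM)
  also have "\<dots> = PM K" by (rule distr_id)
  finally have d1: "distr (PM K) (PM K) (\<lambda>x. \<lambda>i\<in>K. x i) = PM K" .
  have d2: "PiM K (\<lambda>i. distr (PM K) cgauss (\<lambda>x. x i)) = PM K"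
    by (rule PiM_cong) (auto intro: distr_PiM_component[of K "\<lambda>_. cgauss", OF prob_cgauss])
  have iv: "P.indep_vars (\<lambda>_. cgauss) (\<lambda>i x. x i) K"
    by (subst P.indep_vars_iff_distr_eq_PiM'[OF K(2) rv]) (simp_all add: d1 d2)
  have "P.indep_var (PM A) (\<lambda>\<omega>. restrict (\<lambda>i. \<omega> i) A) (PM B) (\<lambda>\<omega>. restrict (\<lambda>i. \<omega> i) B)"
    by (rule P.indep_var_restrict[OF iv AB])
  then have "P.indep_var borel (F \<circ> (\<lambda>\<omega>. restrict (\<lambda>i. \<omega> i) A)) borel (G \<circ> (\<lambda>\<omega>. restrict (\<lambda>i. \<omega> i) B))"
    by (rule P.indep_var_compose[OF _ Fm Gm])
  moreover have "F \<circ> (\<lambda>\<omega>. restrict (\<lambda>i. \<omega> i) A) = F" "G \<circ> (\<lambda>\<omega>. restrict (\<lambda>i. \<omega> i) B) = G"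
    using Fr Gr by (auto simp: fun_eq_iff)
  ultimately have ind: "P.indep_var borel F borel G" by simp
  show ?thesis using P.indep_var_lebesgue_integral[OF ind Fi Gi] P.indep_var_integrable[OF ind Fi Gi]
    by simp
qed

definition Q2 :: "'i set \<Rightarrow> ('i \<Rightarrow> complex) \<Rightarrow> real" where
  "Q2 K y = (\<Sum>i\<in>K. (cmod (y i))\<^sup>2)"
definition Q4 :: "'i set \<Rightarrow> ('i \<Rightarrow> complex) \<Rightarrow> real" where
  "Q4 K y = (\<Sum>i\<in>K. (cmod (y i))^4)"

lemma Q2_nonneg: "0 \<le> Q2 K y" unfolding Q2_def by (simp add: sum_nonneg)
lemma Q4_nonneg: "0 \<le> Q4 K y" unfolding Q4_def by (simp add: sum_nonneg)

lemma Q4_int: "finite K \<Longrightarrow> integrable (PM K) (Q4 K)"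
  unfolding Q4_def[abs_def]
  by (intro Bochner_Integration.integrable_sum) (use PM_comp[of _ K "\<lambda>z. (cmod z)^4"] CG_4 in auto)

lemma coord_le_Q2: "finite K \<Longrightarrow> i \<in> K \<Longrightarrow> (cmod (y i))\<^sup>2 \<le> Q2 K y"
  unfolding Q2_def by (rule member_le_sum) auto

lemma coord_le_sqrtQ2: "finite K \<Longrightarrow> i \<in> K \<Longrightarrow> cmod (y i) \<le> sqrt (Q2 K y)"
  by (rule real_le_rsqrt[OF coord_le_Q2])

lemma sum_sq_le: fixes a :: "'i \<Rightarrow> real" assumes "finite K"
  shows "(\<Sum>i\<in>K. a i)\<^sup>2 \<le> real (card K) * (\<Sum>i\<in>K. (a i)\<^sup>2)"
proof -
  have "(\<Sum>i\<in>K. a i)\<^sup>2 = (\<Sum>i\<in>K. \<Sum>j\<in>K. a i * a j)" by (simp add: power2_eq_square sum_product)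
  also have "\<dots> \<le> (\<Sum>i\<in>K. \<Sum>j\<in>K. ((a i)\<^sup>2 + (a j)\<^sup>2) / 2)"
  proof (intro sum_mono)
    fix i j
    have "0 \<le> (a i - a j)\<^sup>2" by simp
    then show "a i * a j \<le> ((a i)\<^sup>2 + (a j)\<^sup>2) / 2" by (simp add: power2_eq_square algebra_simps)
  qed
  also have "\<dots> = (\<Sum>i\<in>K. \<Sum>j\<in>K. (a i)\<^sup>2 / 2) + (\<Sum>i\<in>K. \<Sum>j\<in>K. (a j)\<^sup>2 / 2)"
    by (simp add: add_divide_distrib sum.distrib)
  also have "\<dots> = real (card K) * (\<Sum>i\<in>K. (a i)\<^sup>2)"
    by (simp add: sum_divide_distrib[symmetric] sum_distrib_left[symmetric])
  finally show ?thesis .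
qed

lemma Q2_sq: "finite K \<Longrightarrow> (Q2 K y)\<^sup>2 \<le> real (card K) * Q4 K y"
  unfolding Q2_def Q4_def using sum_sq_le[of K "\<lambda>i. (cmod (y i))\<^sup>2"]
  by (simp add: power_mult[symmetric])

lemma INT:
  fixes f :: "('i \<Rightarrow> complex) \<Rightarrow> real"
  assumes K: "finite K" and fm: "f \<in> borel_measurable (PM K)"
    and b: "\<And>y. y \<in> space (PM K) \<Longrightarrow> \<bar>f y\<bar> \<le> C * (Q2 K y)\<^sup>2"
  shows "integrable (PM K) f"
proof (rule Bochner_Integration.integrable_bound)
  show "integrable (PM K) (\<lambda>y. \<bar>C\<bar> * real (card K) * Q4 K y)"
    using Q4_int[OF K] by simp
  show "AE y in PM K. norm (f y) \<le> norm (\<bar>C\<bar> * real (card K) * Q4 K y)"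
  proof (intro AE_I2)
    fix y assume y: "y \<in> space (PM K)"
    have "\<bar>f y\<bar> \<le> C * (Q2 K y)\<^sup>2" by (rule b[OF y])
    also have "\<dots> \<le> \<bar>C\<bar> * (Q2 K y)\<^sup>2" by (simp add: mult_right_mono)
    also have "\<dots> \<le> \<bar>C\<bar> * (real (card K) * Q4 K y)" by (rule mult_left_mono[OF Q2_sq[OF K]]) simp
    finally show "norm (f y) \<le> norm (\<bar>C\<bar> * real (card K) * Q4 K y)"
      using Q4_nonneg[of K y] by (simp add: abs_mult)
  qed
qed (rule fm)

definition blk :: "nat \<Rightarrow> (nat \<Rightarrow> 'i) \<Rightarrow> (nat \<Rightarrow> complex) \<Rightarrow> ('i \<Rightarrow> complex) \<Rightarrow> real" where
  "blk N \<beta> w y = (cmod (\<Sum>n<N. y (\<beta> n) * w n))\<^sup>2"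

definition Sabs :: "nat \<Rightarrow> (nat \<Rightarrow> 'i) \<Rightarrow> ('i \<Rightarrow> complex) \<Rightarrow> real" where
  "Sabs N \<beta> y = (\<Sum>n<N. cmod (y (\<beta> n)))"

lemma blk_meas[measurable]: "blk N \<beta> w \<in> borel_measurable (PM K)"
  unfolding blk_def[abs_def] by measurable

lemma Sabs_meas[measurable]: "Sabs N \<beta> \<in> borel_measurable (PM K)"
  unfolding Sabs_def[abs_def] by measurable

lemma Sabs_nonneg: "0 \<le> Sabs N \<beta> y" unfolding Sabs_def by (simp add: sum_nonneg)
lemma blk_nonneg: "0 \<le> blk N \<beta> w y" unfolding blk_def by simp

lemma Sabs_le: assumes "finite K" "\<beta> ` {..<N} \<subseteq> K"
  shows "(Sabs N \<beta> y)\<^sup>2 \<le> real N ^ 2 * Q2 K y"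
proof -
  have "Sabs N \<beta> y \<le> real (card {..<N}) * sqrt (Q2 K y)"
    unfolding Sabs_def by (rule sum_bounded_above) (use assms in \<open>auto intro!: coord_le_sqrtQ2\<close>)
  then have "(Sabs N \<beta> y)\<^sup>2 \<le> (real N * sqrt (Q2 K y))\<^sup>2"
    by (intro power_mono) (auto simp: Sabs_nonneg)
  then show ?thesis by (simp add: power_mult_distrib Q2_nonneg)
qed

lemma blk_le_Sabs: assumes "\<And>n. n < N \<Longrightarrow> cmod (w n) = 1"
  shows "blk N \<beta> w y \<le> (Sabs N \<beta> y)\<^sup>2"
proof -
  have "cmod (\<Sum>n<N. y (\<beta> n) * w n) \<le> (\<Sum>n<N. cmod (y (\<beta> n) * w n))" by (rule norm_sum)
  also have "\<dots> = Sabs N \<beta> y" unfolding Sabs_def by (intro sum.cong) (auto simp: norm_mult assms)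
  finally show ?thesis unfolding blk_def by (intro power_mono) auto
qed

lemma jensen_sq:
  fixes f :: "'a \<Rightarrow> real"
  assumes "prob_space M" "integrable M f" "integrable M (\<lambda>x. (f x)\<^sup>2)"
  shows "(integral\<^sup>L M f)\<^sup>2 \<le> integral\<^sup>L M (\<lambda>x. (f x)\<^sup>2)"
proof -
  interpret prob_space M by fact
  define c where "c = integral\<^sup>L M f"
  have e: "(\<lambda>x. (f x - c)\<^sup>2) = (\<lambda>x. (f x)\<^sup>2 - 2 * c * f x + c\<^sup>2)"
    by (auto simp: fun_eq_iff power2_eq_square algebra_simps)
  have "0 \<le> integral\<^sup>L M (\<lambda>x. (f x - c)\<^sup>2)" by simp
  also have "\<dots> = integral\<^sup>L M (\<lambda>x. (f x)\<^sup>2) - 2 * c * c + c\<^sup>2"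
    unfolding e using assms by (simp add: c_def prob_space)
  finally show ?thesis by (simp add: c_def power2_eq_square)
qed

lemma E_S2:
  assumes K: "finite K" and inj: "inj_on \<beta> {..<N}" and sub: "\<beta> ` {..<N} \<subseteq> K"
  shows "integrable (PM K) (\<lambda>y. (Sabs N \<beta> y)\<^sup>2) \<and>
         integral\<^sup>L (PM K) (\<lambda>y. (Sabs N \<beta> y)\<^sup>2) = real N * (1 + (real N - 1) * m1\<^sup>2)"
proof -
  have trm: "integrable (PM K) (\<lambda>y. cmod (y (\<beta> n)) * cmod (y (\<beta> n'))) \<and>
     integral\<^sup>L (PM K) (\<lambda>y. cmod (y (\<beta> n)) * cmod (y (\<beta> n'))) = (if n = n' then 1 else m1\<^sup>2)"
    if n: "n < N" "n' < N" for n n'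
  proof -
    have bn: "\<beta> n \<in> K" "\<beta> n' \<in> K" using sub n by auto
    show ?thesis
    proof (cases "n = n'")
      case True
      have "integrable cgauss (\<lambda>z. cmod z * cmod z) \<and> integral\<^sup>L cgauss (\<lambda>z. cmod z * cmod z) = 1"
        using CG_sq by (simp add: power2_eq_square)
      then show ?thesis using True PM_comp[OF bn(1), of "\<lambda>z. cmod z * cmod z"] by simp
    next
      case False
      then have ne: "\<beta> n \<noteq> \<beta> n'" using inj n by (auto dest: inj_onD)
      have c1: "integrable (PM K) (\<lambda>y. cmod (y (\<beta> n))) \<and> integral\<^sup>L (PM K) (\<lambda>y. cmod (y (\<beta> n))) = m1"
        using PM_comp[OF bn(1), of cmod] CG_abs_int by (simp add: m1_def)
      have c2: "integrable (PM K) (\<lambda>y. cmod (y (\<beta> n'))) \<and> integral\<^sup>L (PM K) (\<lambda>y. cmod (y (\<beta> n'))) = m1"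
        using PM_comp[OF bn(2), of cmod] CG_abs_int by (simp add: m1_def)
      have "integrable (PM K) (\<lambda>y. cmod (y (\<beta> n)) * cmod (y (\<beta> n'))) \<and>
         integral\<^sup>L (PM K) (\<lambda>y. cmod (y (\<beta> n)) * cmod (y (\<beta> n'))) =
         integral\<^sup>L (PM K) (\<lambda>y. cmod (y (\<beta> n))) * integral\<^sup>L (PM K) (\<lambda>y. cmod (y (\<beta> n')))"
        by (rule PM_indep[where A="{\<beta> n}" and B="{\<beta> n'}"]) (use K bn ne c1 c2 in auto)
      then show ?thesis using c1 c2 False by (simp add: power2_eq_square)
    qed
  qed
  have e: "(\<lambda>y. (Sabs N \<beta> y)\<^sup>2) = (\<lambda>y. \<Sum>n<N. \<Sum>n'<N. cmod (y (\<beta> n)) * cmod (y (\<beta> n')))"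
    by (simp add: Sabs_def power2_eq_square sum_product)
  have i: "integrable (PM K) (\<lambda>y. \<Sum>n<N. \<Sum>n'<N. cmod (y (\<beta> n)) * cmod (y (\<beta> n')))"
    using trm by (intro Bochner_Integration.integrable_sum) auto
  have "integral\<^sup>L (PM K) (\<lambda>y. \<Sum>n<N. \<Sum>n'<N. cmod (y (\<beta> n)) * cmod (y (\<beta> n'))) =
        (\<Sum>n<N. \<Sum>n'<N. integral\<^sup>L (PM K) (\<lambda>y. cmod (y (\<beta> n)) * cmod (y (\<beta> n'))))"
  proof -
    have "integral\<^sup>L (PM K) (\<lambda>y. \<Sum>n<N. \<Sum>n'<N. cmod (y (\<beta> n)) * cmod (y (\<beta> n'))) =
        (\<Sum>n<N. integral\<^sup>L (PM K) (\<lambda>y. \<Sum>n'<N. cmod (y (\<beta> n)) * cmod (y (\<beta> n'))))"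
      by (rule Bochner_Integration.integral_sum) (use trm in \<open>auto intro!: Bochner_Integration.integrable_sum\<close>)
    also have "\<dots> = (\<Sum>n<N. \<Sum>n'<N. integral\<^sup>L (PM K) (\<lambda>y. cmod (y (\<beta> n)) * cmod (y (\<beta> n'))))"
      by (intro sum.cong refl Bochner_Integration.integral_sum) (use trm in auto)
    finally show ?thesis .
  qed
  also have "\<dots> = (\<Sum>n<N. \<Sum>n'<N. (if n = n' then 1 else m1\<^sup>2))"
    using trm by (intro sum.cong) auto
  also have "\<dots> = (\<Sum>n<N. \<Sum>n'<N. (m1\<^sup>2 + (if n = n' then 1 - m1\<^sup>2 else 0)))"
    by (intro sum.cong) auto
  also have "\<dots> = (\<Sum>n<N. (real N * m1\<^sup>2 + (1 - m1\<^sup>2)))"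
    by (intro sum.cong) (auto simp: sum.distrib)
  also have "\<dots> = real N * (1 + (real N - 1) * m1\<^sup>2)"
    by (simp add: algebra_simps)
  finally show ?thesis unfolding e using i by simp
qed

lemma cnj_meas[measurable]: "cnj \<in> borel_measurable borel"
proof -
  have "continuous_on UNIV cnj" by (intro continuous_intros)
  then show ?thesis by (rule borel_measurable_continuous_onI)
qed

lemma blk_expand: "blk N \<beta> w y = (\<Sum>n<N. \<Sum>n'<N. Re (y (\<beta> n) * w n * cnj (y (\<beta> n') * w n')))"
proof -
  have "blk N \<beta> w y = Re ((\<Sum>n<N. y (\<beta> n) * w n) * cnj (\<Sum>n<N. y (\<beta> n) * w n))"
    unfolding blk_def complex_norm_square[symmetric] by simp
  also have "\<dots> = (\<Sum>n<N. \<Sum>n'<N. Re (y (\<beta> n) * w n * cnj (y (\<beta> n') * w n')))"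
    by (simp add: cnj_sum sum_product Re_sum)
  finally show ?thesis .
qed

lemma E_blk:
  assumes K: "finite K" and inj: "inj_on \<beta> {..<N}" and sub: "\<beta> ` {..<N} \<subseteq> K"
    and w: "\<And>n. n < N \<Longrightarrow> cmod (w n) = 1"
  shows "integrable (PM K) (blk N \<beta> w) \<and> integral\<^sup>L (PM K) (blk N \<beta> w) = real N"
proof -
  let ?F = "\<lambda>n n' y. Re (y (\<beta> n) * w n * cnj (y (\<beta> n') * w n'))"
  have trm: "integrable (PM K) (?F n n') \<and> integral\<^sup>L (PM K) (?F n n') = (if n = n' then 1 else 0)"
    if n: "n < N" "n' < N" for n n'
  proof -
    have bn: "\<beta> n \<in> K" "\<beta> n' \<in> K" using sub n by auto
    show ?thesis
    proof (cases "n = n'")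
      case True
      have e: "?F n n' = (\<lambda>y. (cmod (y (\<beta> n)))\<^sup>2)"
      proof
        fix y
        have "?F n n' y = Re (complex_of_real ((cmod (y (\<beta> n) * w n))\<^sup>2))"
          unfolding complex_norm_square True by simp
        also have "\<dots> = (cmod (y (\<beta> n)))\<^sup>2" using w[OF n(1)] by (simp add: norm_mult)
        finally show "?F n n' y = (cmod (y (\<beta> n)))\<^sup>2" .
      qed
      show ?thesis unfolding e using True PM_comp[OF bn(1), of "\<lambda>z. (cmod z)\<^sup>2"] CG_sq by simp
    next
      case False
      then have ne: "\<beta> n \<noteq> \<beta> n'" using inj n by (auto dest: inj_onD)
      have z1: "integrable cgauss (\<lambda>z. z * w n) \<and> integral\<^sup>L cgauss (\<lambda>z. z * w n) = 0"
        using CG_z by simp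
      have z2: "integrable cgauss (\<lambda>z. cnj (z * w n')) \<and> integral\<^sup>L cgauss (\<lambda>z. cnj (z * w n')) = 0"
        using CG_z by (simp add: integral_cnj)
      have c1: "integrable (PM K) (\<lambda>y. y (\<beta> n) * w n) \<and> integral\<^sup>L (PM K) (\<lambda>y. y (\<beta> n) * w n) = 0"
        using PM_comp[OF bn(1), of "\<lambda>z. z * w n"] z1 by auto
      have c2: "integrable (PM K) (\<lambda>y. cnj (y (\<beta> n') * w n')) \<and> integral\<^sup>L (PM K) (\<lambda>y. cnj (y (\<beta> n') * w n')) = 0"
        using PM_comp[OF bn(2), of "\<lambda>z. cnj (z * w n')"] z2 by auto
      have "integrable (PM K) (\<lambda>y. y (\<beta> n) * w n * cnj (y (\<beta> n') * w n')) \<and>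
         integral\<^sup>L (PM K) (\<lambda>y. y (\<beta> n) * w n * cnj (y (\<beta> n') * w n')) =
         integral\<^sup>L (PM K) (\<lambda>y. y (\<beta> n) * w n) * integral\<^sup>L (PM K) (\<lambda>y. cnj (y (\<beta> n') * w n'))"
        by (rule PM_indep[where A="{\<beta> n}" and B="{\<beta> n'}"]) (use K bn ne c1 c2 in auto)
      then have "integrable (PM K) (\<lambda>y. y (\<beta> n) * w n * cnj (y (\<beta> n') * w n')) \<and>
         integral\<^sup>L (PM K) (\<lambda>y. y (\<beta> n) * w n * cnj (y (\<beta> n') * w n')) = 0"
        using c1 c2 by simp
      then have h1: "integrable (PM K) (\<lambda>y. y (\<beta> n) * w n * cnj (y (\<beta> n') * w n'))"
        and h2: "integral\<^sup>L (PM K) (\<lambda>y. y (\<beta> n) * w n * cnj (y (\<beta> n') * w n')) = 0" by auto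
      have i: "integrable (PM K) (?F n n')" using integrable_Re[OF h1] .
      have "integral\<^sup>L (PM K) (?F n n') = Re (integral\<^sup>L (PM K) (\<lambda>y. y (\<beta> n) * w n * cnj (y (\<beta> n') * w n')))"
        by (rule integral_Re[OF h1])
      also have "\<dots> = 0" by (simp only: h2 zero_complex.sel)
      finally show ?thesis using False i by simp
    qed
  qed
  have e: "blk N \<beta> w = (\<lambda>y. \<Sum>n<N. \<Sum>n'<N. ?F n n' y)"
    by (simp add: fun_eq_iff blk_expand)
  have i: "integrable (PM K) (\<lambda>y. \<Sum>n<N. \<Sum>n'<N. ?F n n' y)"
    using trm by (intro Bochner_Integration.integrable_sum) auto
  have "integral\<^sup>L (PM K) (\<lambda>y. \<Sum>n<N. \<Sum>n'<N. ?F n n' y) = (\<Sum>n<N. \<Sum>n'<N. integral\<^sup>L (PM K) (?F n n'))"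
  proof -
    have "integral\<^sup>L (PM K) (\<lambda>y. \<Sum>n<N. \<Sum>n'<N. ?F n n' y) = (\<Sum>n<N. integral\<^sup>L (PM K) (\<lambda>y. \<Sum>n'<N. ?F n n' y))"
      by (rule Bochner_Integration.integral_sum) (use trm in \<open>auto intro!: Bochner_Integration.integrable_sum\<close>)
    also have "\<dots> = (\<Sum>n<N. \<Sum>n'<N. integral\<^sup>L (PM K) (?F n n'))"
      by (intro sum.cong refl Bochner_Integration.integral_sum) (use trm in auto)
    finally show ?thesis .
  qed
  also have "\<dots> = (\<Sum>n<N. \<Sum>n'<N. (if n = n' then 1 else 0))"
    using trm by (intro sum.cong) auto
  also have "\<dots> = real N" by simp
  finally show ?thesis unfolding e using i by simp
qed

lemma blk_restrict: "\<beta> ` {..<N} \<subseteq> A \<Longrightarrow> blk N \<beta> w (restrict x A) = blk N \<beta> w x"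
  unfolding blk_def by (intro arg_cong[where f="\<lambda>s. (cmod s)\<^sup>2"] sum.cong) auto

lemma E_blk_disj:
  assumes K: "finite K" and N: "0 < N" and inj: "inj_on \<beta> {..<N}" "inj_on \<gamma> {..<N}"
    and sub: "\<beta> ` {..<N} \<subseteq> K" "\<gamma> ` {..<N} \<subseteq> K" and dj: "\<beta> ` {..<N} \<inter> \<gamma> ` {..<N} = {}"
    and w: "\<And>n. n < N \<Longrightarrow> cmod (w n) = 1"
  shows "integrable (PM K) (\<lambda>y. blk N \<beta> w y * blk N \<gamma> w y) \<and>
         integral\<^sup>L (PM K) (\<lambda>y. blk N \<beta> w y * blk N \<gamma> w y) = real N * real N"
proof -
  have "\<beta> 0 \<in> K" using sub N by auto
  then have Kne: "K \<noteq> {}" by auto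
  have "integrable (PM K) (\<lambda>y. blk N \<beta> w y * blk N \<gamma> w y) \<and>
         integral\<^sup>L (PM K) (\<lambda>y. blk N \<beta> w y * blk N \<gamma> w y) = integral\<^sup>L (PM K) (blk N \<beta> w) * integral\<^sup>L (PM K) (blk N \<gamma> w)"
    by (rule PM_indep[where A="\<beta> ` {..<N}" and B="\<gamma> ` {..<N}"])
       (use K Kne sub dj E_blk[OF K inj(1) sub(1) w] E_blk[OF K inj(2) sub(2) w] in \<open>auto intro: blk_restrict\<close>)
  then show ?thesis using E_blk[OF K inj(1) sub(1) w] E_blk[OF K inj(2) sub(2) w] by simp
qed

lemma E_blk_same:
  assumes K: "finite K" and inj: "inj_on \<beta> {..<N}"
    and sub: "\<beta> ` {..<N} \<subseteq> K" and w: "\<And>n. n < N \<Longrightarrow> cmod (w n) = 1"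
  shows "integrable (PM K) (\<lambda>y. blk N \<beta> w y * blk N \<beta> w y) \<and>
         real N * real N \<le> integral\<^sup>L (PM K) (\<lambda>y. blk N \<beta> w y * blk N \<beta> w y)"
proof -
  have i2: "integrable (PM K) (\<lambda>y. blk N \<beta> w y * blk N \<beta> w y)"
  proof (rule INT[OF K, where C="real N ^ 4"])
    fix y
    have b: "blk N \<beta> w y \<le> real N ^ 2 * Q2 K y"
      by (rule order_trans[OF blk_le_Sabs[OF w] Sabs_le[OF K sub]])
    have "\<bar>blk N \<beta> w y * blk N \<beta> w y\<bar> = (blk N \<beta> w y)\<^sup>2" by (simp add: power2_eq_square blk_nonneg)
    also have "\<dots> \<le> (real N ^ 2 * Q2 K y)\<^sup>2" by (rule power_mono[OF b blk_nonneg])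
    also have "\<dots> = real N ^ 4 * (Q2 K y)\<^sup>2" by (simp add: power_mult_distrib power_mult[symmetric])
    finally show "\<bar>blk N \<beta> w y * blk N \<beta> w y\<bar> \<le> real N ^ 4 * (Q2 K y)\<^sup>2" .
  qed simp
  have "(integral\<^sup>L (PM K) (blk N \<beta> w))\<^sup>2 \<le> integral\<^sup>L (PM K) (\<lambda>y. (blk N \<beta> w y)\<^sup>2)"
    by (rule jensen_sq[OF PM_prob]) (use E_blk[OF K inj sub w] i2 in \<open>auto simp: power2_eq_square\<close>)
  then show ?thesis using i2 E_blk[OF K inj sub w] by (simp add: power2_eq_square)
qed

lemma inner:
  fixes bt br :: "nat \<Rightarrow> nat \<Rightarrow> 'i" and Ts Rs :: "nat set"
  assumes K: "finite K" and N: "0 < N" and fin: "finite Ts" "finite Rs"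
    and injt: "\<And>k. k \<in> Ts \<Longrightarrow> inj_on (bt k) {..<N}" and injr: "\<And>m. m \<in> Rs \<Longrightarrow> inj_on (br m) {..<N}"
    and subt: "\<And>k. k \<in> Ts \<Longrightarrow> bt k ` {..<N} \<subseteq> K" and subr: "\<And>m. m \<in> Rs \<Longrightarrow> br m ` {..<N} \<subseteq> K"
    and rel: "\<And>k m. k \<in> Ts \<Longrightarrow> m \<in> Rs \<Longrightarrow>
        (\<forall>n<N. bt k n = br m n) \<or> bt k ` {..<N} \<inter> br m ` {..<N} = {}"
    and w: "\<And>n. n < N \<Longrightarrow> cmod (w n) = 1" and c: "0 \<le> c"
  shows "integrable (PM K) (\<lambda>y. (c + (\<Sum>k\<in>Ts. blk N (bt k) w y)) * (c + (\<Sum>m\<in>Rs. blk N (br m) w y))) \<and>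
     (c + real (card Ts) * real N) * (c + real (card Rs) * real N) \<le>
     integral\<^sup>L (PM K) (\<lambda>y. (c + (\<Sum>k\<in>Ts. blk N (bt k) w y)) * (c + (\<Sum>m\<in>Rs. blk N (br m) w y)))"
proof -
  interpret P: prob_space "PM K" by (rule PM_prob)
  let ?T = "\<lambda>y. \<Sum>k\<in>Ts. blk N (bt k) w y"
  let ?R = "\<lambda>y. \<Sum>m\<in>Rs. blk N (br m) w y"
  let ?P = "\<lambda>y. \<Sum>k\<in>Ts. \<Sum>m\<in>Rs. blk N (bt k) w y * blk N (br m) w y"
  have pk: "integrable (PM K) (\<lambda>y. blk N (bt k) w y * blk N (br m) w y) \<and>
            real N * real N \<le> integral\<^sup>L (PM K) (\<lambda>y. blk N (bt k) w y * blk N (br m) w y)"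
    if km: "k \<in> Ts" "m \<in> Rs" for k m
  proof (cases "\<forall>n<N. bt k n = br m n")
    case True
    then have "blk N (br m) w = blk N (bt k) w" by (auto simp: fun_eq_iff blk_def)
    then show ?thesis using E_blk_same[OF K injt[OF km(1)] subt[OF km(1)] w] by simp
  next
    case False
    then have dj: "bt k ` {..<N} \<inter> br m ` {..<N} = {}" using rel[OF km] by blast
    show ?thesis using E_blk_disj[OF K N injt[OF km(1)] injr[OF km(2)] subt[OF km(1)] subr[OF km(2)] dj w] by simp
  qed
  have iT: "integrable (PM K) ?T" "integral\<^sup>L (PM K) ?T = real (card Ts) * real N"
    using E_blk[OF K injt subt w] by (auto simp: Bochner_Integration.integral_sum)
  have iR: "integrable (PM K) ?R" "integral\<^sup>L (PM K) ?R = real (card Rs) * real N"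
    using E_blk[OF K injr subr w] by (auto simp: Bochner_Integration.integral_sum)
  have iP: "integrable (PM K) ?P"
    using pk by (intro Bochner_Integration.integrable_sum) auto
  have lP: "real (card Ts) * real (card Rs) * (real N * real N) \<le> integral\<^sup>L (PM K) ?P"
  proof -
    have "integral\<^sup>L (PM K) ?P = (\<Sum>k\<in>Ts. integral\<^sup>L (PM K) (\<lambda>y. \<Sum>m\<in>Rs. blk N (bt k) w y * blk N (br m) w y))"
      by (rule Bochner_Integration.integral_sum) (use pk in \<open>auto intro!: Bochner_Integration.integrable_sum\<close>)
    also have "\<dots> = (\<Sum>k\<in>Ts. \<Sum>m\<in>Rs. integral\<^sup>L (PM K) (\<lambda>y. blk N (bt k) w y * blk N (br m) w y))"
      by (intro sum.cong refl Bochner_Integration.integral_sum) (use pk in auto)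
    also have "\<dots> \<ge> (\<Sum>k\<in>Ts. \<Sum>m\<in>Rs. real N * real N)"
      using pk by (intro sum_mono) auto
    finally show ?thesis by simp
  qed
  have e: "(\<lambda>y. (c + ?T y) * (c + ?R y)) = (\<lambda>y. c * c + c * ?T y + c * ?R y + ?P y)"
  proof
    fix y
    have "?T y * ?R y = ?P y" by (simp add: sum_product)
    then show "(c + ?T y) * (c + ?R y) = c * c + c * ?T y + c * ?R y + ?P y"
      by (simp add: algebra_simps)
  qed
  have int: "integrable (PM K) (\<lambda>y. c * c + c * ?T y + c * ?R y + ?P y)"
    using iT iR iP by auto
  have "integral\<^sup>L (PM K) (\<lambda>y. c * c + c * ?T y + c * ?R y + ?P y) =
        c * c + c * integral\<^sup>L (PM K) ?T + c * integral\<^sup>L (PM K) ?R + integral\<^sup>L (PM K) ?P"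
    using iT iR iP by (simp add: P.prob_space)
  then have "integral\<^sup>L (PM K) (\<lambda>y. (c + ?T y) * (c + ?R y)) =
      c * c + c * (real (card Ts) * real N) + c * (real (card Rs) * real N) + integral\<^sup>L (PM K) ?P"
    unfolding e iT iR .
  moreover have "(c + real (card Ts) * real N) * (c + real (card Rs) * real N) =
      c * c + c * (real (card Ts) * real N) + c * (real (card Rs) * real N) + real (card Ts) * real (card Rs) * (real N * real N)"
    by (simp add: algebra_simps)
  ultimately show ?thesis using lP int e by simp
qed



lemma pi_facts: "pi * pi - 2 * pi - 4 \<le> 0" "pi ^ 3 \<le> 32"
proof -
  have p1: "pi \<le> 63/20" using pi_approx by simp
  have p0: "3 \<le> pi" using pi_approx by simp
  have "pi * pi \<le> 63/20 * pi" using p1 p0 by (intro mult_right_mono) auto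
  then show "pi * pi - 2 * pi - 4 \<le> 0" using p1 by linarith
  have "pi ^ 3 \<le> (63/20) ^ 3" using p1 p0 by (intro power_mono) auto
  moreover have "(63/20::real) ^ 3 \<le> 32" by (simp add: power3_eq_cube)
  ultimately show "pi ^ 3 \<le> 32" by linarith
qed

lemma key_Na:
  fixes x m :: real
  assumes x: "0 \<le> x" and m: "2 / pi \<le> m"
  shows "(1 + pi * x / 4)\<^sup>2 \<le> (x + 1) * (1 + x * m)"
proof -
  have pp: "0 < pi" by simp
  have c1: "0 \<le> 1 + 2 / pi - pi / 2"
  proof -
    have "0 \<le> (4 + 2 * pi - pi * pi) / (2 * pi)" using pi_facts(1) pp by (intro divide_nonneg_pos) auto
    also have "(4 + 2 * pi - pi * pi) / (2 * pi) = 1 + 2 / pi - pi / 2" using pp by (simp add: field_simps)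
    finally show ?thesis .
  qed
  have c2: "0 \<le> 2 / pi - pi\<^sup>2 / 16"
  proof -
    have "0 \<le> (32 - pi ^ 3) / (16 * pi)" using pi_facts(2) pp by (intro divide_nonneg_pos) auto
    also have "(32 - pi ^ 3) / (16 * pi) = 2 / pi - pi\<^sup>2 / 16" using pp by (simp add: field_simps power2_eq_square power3_eq_cube)
    finally show ?thesis .
  qed
  have "(x + 1) * (1 + x * m) \<ge> (x + 1) * (1 + x * (2 / pi))"
    using x m by (intro mult_left_mono add_left_mono mult_left_mono) auto
  moreover have "(x + 1) * (1 + x * (2 / pi)) - (1 + pi * x / 4)\<^sup>2 = x * (1 + 2 / pi - pi / 2) + x\<^sup>2 * (2 / pi - pi\<^sup>2 / 16)"
    by (simp add: field_simps power2_eq_square)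
  moreover have "0 \<le> x * (1 + 2 / pi - pi / 2) + x\<^sup>2 * (2 / pi - pi\<^sup>2 / 16)"
    using x c1 c2 by simp
  ultimately show ?thesis by linarith
qed

lemma key_main:
  fixes N Mt Mr L m :: real
  assumes N: "1 \<le> N" and Mt: "1 \<le> Mt" and Mr: "1 \<le> Mr" and L: "0 < L"
    and m: "2 / pi \<le> m" "m \<le> 1"
    and h: "Mt * Mr < L * (Mt + pi * (N - 1) / 4) * (Mr + pi * (N - 1) / 4)"
  shows "Mt * Mr * (1 + (N - 1) * m) < L * N * (Mt + (N - 1) * m) * (Mr + (N - 1) * m)"
proof -
  define a where "a = pi * (N - 1) / 4"
  define b where "b = (N - 1) * m"
  have m0: "0 \<le> m" using m(1) by (smt (verit) divide_nonneg_pos pi_gt_zero)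
  have a0: "0 \<le> a" using N by (simp add: a_def)
  have b0: "0 \<le> b" using N m0 by (simp add: b_def)
  have bN: "1 + b \<le> N" using N m by (simp add: b_def) (smt (verit) mult_left_le)
  have key: "(1 + b) * ((Mt + a) * (Mr + a)) \<le> N * ((Mt + b) * (Mr + b))"
  proof (cases "a \<le> b")
    case True
    have "(Mt + a) * (Mr + a) \<le> (Mt + b) * (Mr + b)"
      using True a0 Mt Mr by (intro mult_mono) auto
    then show ?thesis using bN b0 Mt Mr a0 True by (intro mult_mono) auto
  next
    case False
    have t: "(1 + b) * (Mt + a) \<le> (Mt + b) * (1 + a)"
    proof -
      have "(Mt + b) * (1 + a) - (1 + b) * (Mt + a) = (Mt - 1) * (a - b)" by (simp add: algebra_simps)
      moreover have "0 \<le> (Mt - 1) * (a - b)" using Mt False by simp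
      ultimately show ?thesis by linarith
    qed
    have r: "(1 + b) * (Mr + a) \<le> (Mr + b) * (1 + a)"
    proof -
      have "(Mr + b) * (1 + a) - (1 + b) * (Mr + a) = (Mr - 1) * (a - b)" by (simp add: algebra_simps)
      moreover have "0 \<le> (Mr - 1) * (a - b)" using Mr False by simp
      ultimately show ?thesis by linarith
    qed
    have na: "(1 + a)\<^sup>2 \<le> N * (1 + b)"
      using key_Na[of "N - 1" m] N m by (simp add: a_def b_def mult.commute)
    have "(1 + a)\<^sup>2 * ((1 + b) * ((Mt + a) * (Mr + a))) \<le> N * (1 + b) * ((1 + b) * ((Mt + a) * (Mr + a)))"
      using na b0 a0 Mt Mr by (intro mult_right_mono) auto
    also have "\<dots> = N * (((1 + b) * (Mt + a)) * ((1 + b) * (Mr + a)))" by (simp add: algebra_simps)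
    also have "\<dots> \<le> N * (((Mt + b) * (1 + a)) * ((Mr + b) * (1 + a)))"
    proof -
      have "((1 + b) * (Mt + a)) * ((1 + b) * (Mr + a)) \<le> ((Mt + b) * (1 + a)) * ((Mr + b) * (1 + a))"
        by (rule mult_mono[OF t r]) (use b0 a0 Mt Mr in auto)
      then show ?thesis by (rule mult_left_mono) (use N in auto)
    qed
    also have "\<dots> = (1 + a)\<^sup>2 * (N * ((Mt + b) * (Mr + b)))" by (simp add: algebra_simps power2_eq_square)
    finally show ?thesis using a0 by (simp add: mult_le_cancel_left_pos)
  qed
  have "Mt * Mr * (1 + b) < L * (Mt + a) * (Mr + a) * (1 + b)"
    unfolding a_def by (rule mult_strict_right_mono[OF h]) (use b0 in simp)
  also have "\<dots> = L * ((1 + b) * ((Mt + a) * (Mr + a)))" by (simp add: ac_simps)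
  also have "\<dots> \<le> L * (N * ((Mt + b) * (Mr + b)))" using key L by simp
  finally show ?thesis by (simp add: b_def algebra_simps)
qed

lemma hyp_transform:
  fixes N Mt Mr L :: real and Kmin Kmax :: real
  assumes N: "1 \<le> N" and Mt: "0 \<le> Mt" and Mr: "0 \<le> Mr" and L: "0 < L" and K: "Kmin * Kmax = Mt * Mr"
    and h: "N > 2 / pi * sqrt ((Mt + Mr)\<^sup>2 + 4 * (Mt * Mr / L - Kmin * Kmax)) - 2 * (Mt + Mr) / pi + 1"
  shows "Mt * Mr < L * (Mt + pi * (N - 1) / 4) * (Mr + pi * (N - 1) / 4)"
proof -
  define D where "D = (Mt + Mr)\<^sup>2 + 4 * (Mt * Mr / L - Mt * Mr)"
  have D0: "0 \<le> D"
  proof -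
    have "D = (Mt - Mr)\<^sup>2 + 4 * (Mt * Mr / L)" by (simp add: D_def power2_eq_square algebra_simps)
    then show ?thesis using Mt Mr L by simp
  qed
  define a where "a = pi * (N - 1) / 4"
  define x where "x = 2 * a + (Mt + Mr)"
  have xe: "x = pi / 2 * (N - 1) + (Mt + Mr)" by (simp add: x_def a_def)
  have hx: "sqrt D < x"
  proof -
    have "2 / pi * sqrt D < N - 1 + 2 * (Mt + Mr) / pi" using h K by (simp add: D_def)
    then have "pi / 2 * (2 / pi * sqrt D) < pi / 2 * (N - 1 + 2 * (Mt + Mr) / pi)"
      by (intro mult_strict_left_mono) auto
    moreover have "pi / 2 * (2 / pi * sqrt D) = sqrt D" by simp
    moreover have "pi / 2 * (N - 1 + 2 * (Mt + Mr) / pi) = x" by (simp add: xe field_simps)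
    ultimately show ?thesis by simp
  qed
  have "D < x\<^sup>2"
  proof -
    have "(sqrt D)\<^sup>2 < x\<^sup>2" using hx D0 by (intro power_strict_mono) auto
    then show ?thesis using D0 by simp
  qed
  moreover have "x\<^sup>2 - D = 4 * ((Mt + a) * (Mr + a) - Mt * Mr / L)"
    by (simp add: D_def x_def power2_eq_square algebra_simps)
  ultimately have "0 < 4 * ((Mt + a) * (Mr + a) - Mt * Mr / L)"
    by linarith
  then have "Mt * Mr / L < (Mt + a) * (Mr + a)" by simp
  then have "Mt * Mr / L < (Mt + pi * (N - 1) / 4) * (Mr + pi * (N - 1) / 4)" by (simp add: a_def)
  then show ?thesis using L by (simp add: divide_less_eq mult.commute mult.left_commute)
qed



type_synonym idx = "nat \<times> nat \<times> nat"

definition bt :: "nat \<Rightarrow> nat \<Rightarrow> nat \<Rightarrow> nat \<Rightarrow> idx" where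
  "bt Mt Mr k n = (if k < min Mt Mr then (0, n, k) else (1, n, k - min Mt Mr))"
definition br :: "nat \<Rightarrow> nat \<Rightarrow> nat \<Rightarrow> nat \<Rightarrow> idx" where
  "br Mt Mr m n = (if m < min Mt Mr then (0, n, m) else (2, m - min Mt Mr, n))"

lemma Gt_bt: "Gt Mt Mr z n k = z (bt Mt Mr k n)" by (simp add: Gt_def bt_def)
lemma Gr_br: "Gr Mt Mr z m n = z (br Mt Mr m n)" by (simp add: Gr_def br_def)

lemma bt_in: "k < Mt \<Longrightarrow> n < N \<Longrightarrow> bt Mt Mr k n \<in> chan_index N Mt Mr"
  by (auto simp: bt_def chan_index_def)
lemma br_in: "m < Mr \<Longrightarrow> n < N \<Longrightarrow> br Mt Mr m n \<in> chan_index N Mt Mr"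
  by (auto simp: br_def chan_index_def)

lemma bt_inj: "inj_on (bt Mt Mr k) A" by (auto simp: bt_def inj_on_def split: if_splits)
lemma br_inj: "inj_on (br Mt Mr m) A" by (auto simp: br_def inj_on_def split: if_splits)

lemma fin_I: "finite (chan_index N Mt Mr)"
  by (simp add: chan_index_def)

lemma bt_sub: "k < Mt \<Longrightarrow> bt Mt Mr k ` {..<N} \<subseteq> chan_index N Mt Mr"
  using bt_in by blast
lemma br_sub: "m < Mr \<Longrightarrow> br Mt Mr m ` {..<N} \<subseteq> chan_index N Mt Mr"
  using br_in by blast

lemma bt0: "0 < Mt \<Longrightarrow> 0 < Mr \<Longrightarrow> bt Mt Mr 0 n = (0, n, 0)" by (simp add: bt_def)
lemma br0: "0 < Mt \<Longrightarrow> 0 < Mr \<Longrightarrow> br Mt Mr 0 n = (0, n, 0)" by (simp add: br_def)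

lemma bt_rel: "(\<forall>n<N. bt Mt Mr k n = br Mt Mr m n) \<or> bt Mt Mr k ` {..<N} \<inter> br Mt Mr m ` {..<N} = {}"
  by (auto simp: bt_def br_def split: if_splits)

definition uu :: "real \<Rightarrow> real \<Rightarrow> nat \<Rightarrow> real \<Rightarrow> (nat \<Rightarrow> real) \<Rightarrow> nat \<Rightarrow> complex" where
  "uu d lam N \<theta> \<phi> n = exp (\<i> * complex_of_real (\<phi> n)) * steer d lam N \<theta> n"

lemma steer_norm: "cmod (steer d lam N \<theta> n) = 1"
  unfolding steer_def by (rule norm_exp_i_times)

lemma uu_norm: "cmod (uu d lam N \<theta> \<phi> n) = 1"
  unfolding uu_def norm_mult steer_norm by (simp add: norm_exp_i_times)

lemma tx_blk: "tx_gain d lam N Mt Mr \<theta> z \<phi> = (\<Sum>k<Mt. blk N (bt Mt Mr k) (uu d lam N \<theta> \<phi>) z)"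
  unfolding tx_gain_def blk_def uu_def Gt_bt by (simp add: mult.assoc)

lemma rx_blk: "rx_gain d lam N Mt Mr \<theta> z \<phi> = (\<Sum>m<Mr. blk N (br Mt Mr m) (uu d lam N \<theta> \<phi>) z)"
  unfolding rx_gain_def blk_def uu_def Gr_br by (simp add: mult.assoc)

lemma blk_bound: assumes "finite K" "\<beta> ` {..<N} \<subseteq> K" "\<And>n. n < N \<Longrightarrow> cmod (w n) = 1"
  shows "blk N \<beta> w y \<le> real N ^ 2 * Q2 K y"
  by (rule order_trans[OF blk_le_Sabs[OF assms(3)] Sabs_le[OF assms(1,2)]])

lemma sum_blk_bound:
  assumes "finite K" "\<And>k. k < M \<Longrightarrow> \<beta> k ` {..<N} \<subseteq> K" "\<And>n. n < N \<Longrightarrow> cmod (w n) = 1"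
  shows "(\<Sum>k<M. blk N (\<beta> k) w y) \<le> real M * (real N ^ 2 * Q2 K y)"
proof -
  have "(\<Sum>k<M. blk N (\<beta> k) w y) \<le> (\<Sum>k<M. real N ^ 2 * Q2 K y)"
    by (intro sum_mono blk_bound assms) auto
  then show ?thesis by simp
qed

lemma tx_bound: "tx_gain d lam N Mt Mr \<theta> z \<phi> \<le> real Mt * (real N ^ 2 * Q2 (chan_index N Mt Mr) z)"
  unfolding tx_blk by (rule sum_blk_bound[OF fin_I bt_sub uu_norm])
lemma rx_bound: "rx_gain d lam N Mt Mr \<theta> z \<phi> \<le> real Mr * (real N ^ 2 * Q2 (chan_index N Mt Mr) z)"
  unfolding rx_blk by (rule sum_blk_bound[OF fin_I br_sub uu_norm])

lemma tx_nonneg: "0 \<le> tx_gain d lam N Mt Mr \<theta> z \<phi>" unfolding tx_gain_def by (simp add: sum_nonneg)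
lemma rx_nonneg: "0 \<le> rx_gain d lam N Mt Mr \<theta> z \<phi>" unfolding rx_gain_def by (simp add: sum_nonneg)

lemma tx_cont: "continuous_on UNIV (tx_gain d lam N Mt Mr \<theta> z)"
  unfolding tx_gain_def[abs_def] by (intro continuous_intros continuous_on_product_coordinates)
lemma rx_cont: "continuous_on UNIV (rx_gain d lam N Mt Mr \<theta> z)"
  unfolding rx_gain_def[abs_def] by (intro continuous_intros continuous_on_product_coordinates)

lemma tx_meas[measurable]: "(\<lambda>z. tx_gain d lam N Mt Mr \<theta> z \<phi>) \<in> borel_measurable (PM K)"
  unfolding tx_gain_def Gt_def by measurable
lemma rx_meas[measurable]: "(\<lambda>z. rx_gain d lam N Mt Mr \<theta> z \<phi>) \<in> borel_measurable (PM K)"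
  unfolding rx_gain_def Gr_def by measurable

lemma SUP_meas:
  fixes G :: "'a \<Rightarrow> (nat \<Rightarrow> real) \<Rightarrow> real"
  assumes meas: "\<And>\<phi>. (\<lambda>z. G z \<phi>) \<in> borel_measurable M"
    and cont: "\<And>z. z \<in> space M \<Longrightarrow> continuous_on UNIV (G z)"
    and bdd: "\<And>z. z \<in> space M \<Longrightarrow> bdd_above (range (G z))"
  shows "(\<lambda>z. SUP \<phi>. G z \<phi>) \<in> borel_measurable M"
proof -
  obtain D :: "(nat \<Rightarrow> real) set" where D: "countable D" "\<And>X. open X \<Longrightarrow> X \<noteq> {} \<Longrightarrow> \<exists>d\<in>D. d \<in> X"
    using countable_dense_setE by blast
  have Dne: "D \<noteq> {}" using D(2)[of UNIV] by auto
  have eq: "(SUP \<phi>. G z \<phi>) = (SUP \<phi>\<in>D. G z \<phi>)" if z: "z \<in> space M" for z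
  proof (rule antisym)
    have bD: "bdd_above (G z ` D)" using bdd[OF z] by (rule bdd_above_mono) auto
    show "(SUP \<phi>. G z \<phi>) \<le> (SUP \<phi>\<in>D. G z \<phi>)"
    proof (rule cSUP_least)
      fix \<phi> show "G z \<phi> \<le> (SUP \<phi>\<in>D. G z \<phi>)"
      proof (rule ccontr)
        assume "\<not> G z \<phi> \<le> (SUP \<phi>\<in>D. G z \<phi>)"
        then have lt: "(SUP \<phi>\<in>D. G z \<phi>) < G z \<phi>" by simp
        have op: "open (G z -` {(SUP \<phi>\<in>D. G z \<phi>)<..})"
          using cont[OF z] by (intro open_vimage) auto
        have "\<phi> \<in> G z -` {(SUP \<phi>\<in>D. G z \<phi>)<..}" using lt by simp
        then obtain d where d: "d \<in> D" "d \<in> G z -` {(SUP \<phi>\<in>D. G z \<phi>)<..}"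
          using D(2)[OF op] by blast
        have "G z d \<le> (SUP \<phi>\<in>D. G z \<phi>)" by (rule cSUP_upper[OF d(1) bD])
        then show False using d(2) by simp
      qed
    qed simp
    show "(SUP \<phi>\<in>D. G z \<phi>) \<le> (SUP \<phi>. G z \<phi>)"
      by (rule cSUP_subset_mono) (use Dne bdd[OF z] in auto)
  qed
  have bD: "bdd_above (G z ` D)" if "z \<in> space M" for z
    using bdd[OF that] by (rule bdd_above_mono) auto
  have "(\<lambda>z. SUP \<phi>\<in>D. G z \<phi>) \<in> borel_measurable M"
    by (rule borel_measurable_cSUP) (use D(1) meas bD in auto)
  then show ?thesis using eq by (subst measurable_cong) auto
qed

definition ph :: "complex \<Rightarrow> complex" where
  "ph c = (if c = 0 then 1 else cnj c / complex_of_real (cmod c))"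

lemma ph_norm: "cmod (ph c) = 1"
  by (auto simp: ph_def norm_divide)

lemma ph_mult: "c * ph c = complex_of_real (cmod c)"
proof (cases "c = 0")
  case False
  have "c * cnj c = complex_of_real ((cmod c)\<^sup>2)" by (rule complex_norm_square[symmetric])
  then have "c * ph c = complex_of_real ((cmod c)\<^sup>2) / complex_of_real (cmod c)"
    using False by (simp add: ph_def)
  also have "\<dots> = complex_of_real (cmod c)" using False by (simp add: power2_eq_square)
  finally show ?thesis .
qed (simp add: ph_def)

definition vz :: "(idx \<Rightarrow> complex) \<Rightarrow> nat \<Rightarrow> complex" where
  "vz z n = ph (z (0, n, 0))"

lemma vz_norm: "cmod (vz z n) = 1" by (simp add: vz_def ph_norm)

definition phis :: "real \<Rightarrow> real \<Rightarrow> nat \<Rightarrow> real \<Rightarrow> (idx \<Rightarrow> complex) \<Rightarrow> nat \<Rightarrow> real" where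
  "phis d lam N \<theta> z n = Arg (vz z n * cnj (steer d lam N \<theta> n))"

lemma uu_phis: "uu d lam N \<theta> (phis d lam N \<theta> z) n = vz z n"
proof -
  let ?s = "steer d lam N \<theta> n"
  let ?a = "vz z n * cnj ?s"
  have "cmod ?a = 1" by (simp add: norm_mult vz_norm steer_norm)
  then have e: "exp (\<i> * complex_of_real (Arg ?a)) = ?a" by (simp add: complex_norm_eq_1_exp_eq)
  have "cnj ?s * ?s = 1"
    using complex_norm_square[of ?s] steer_norm[of d lam N \<theta> n] by (simp add: mult.commute)
  then show ?thesis unfolding uu_def phis_def e by (simp add: mult.assoc)
qed

lemma blk_cong: "(\<And>n. n < N \<Longrightarrow> w n = w' n) \<Longrightarrow> (\<And>n. n < N \<Longrightarrow> y (\<beta> n) = y' (\<beta> n)) \<Longrightarrow>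
   blk N \<beta> w y = blk N \<beta> w' y'"
  unfolding blk_def by (intro arg_cong[where f="\<lambda>s. (cmod s)\<^sup>2"] sum.cong) auto

lemma blk0: assumes "0 < Mt" "0 < Mr"
  shows "blk N (bt Mt Mr 0) (vz z) z = (Sabs N (bt Mt Mr 0) z)\<^sup>2"
proof -
  have "(\<Sum>n<N. z (bt Mt Mr 0 n) * vz z n) = complex_of_real (Sabs N (bt Mt Mr 0) z)"
    unfolding Sabs_def of_real_sum by (intro sum.cong) (auto simp: bt0[OF assms] vz_def ph_mult)
  then show ?thesis unfolding blk_def by (simp add: Sabs_nonneg)
qed

definition XX :: "nat \<Rightarrow> nat \<Rightarrow> nat \<Rightarrow> (idx \<Rightarrow> complex) \<Rightarrow> real" where
  "XX N Mt Mr z = (Sabs N (bt Mt Mr 0) z)\<^sup>2"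
definition TT :: "nat \<Rightarrow> nat \<Rightarrow> nat \<Rightarrow> (nat \<Rightarrow> complex) \<Rightarrow> (idx \<Rightarrow> complex) \<Rightarrow> real" where
  "TT N Mt Mr w y = (\<Sum>k\<in>{1..<Mt}. blk N (bt Mt Mr k) w y)"
definition RR :: "nat \<Rightarrow> nat \<Rightarrow> nat \<Rightarrow> (nat \<Rightarrow> complex) \<Rightarrow> (idx \<Rightarrow> complex) \<Rightarrow> real" where
  "RR N Mt Mr w y = (\<Sum>m\<in>{1..<Mr}. blk N (br Mt Mr m) w y)"

lemma lessThan_split: "0 < M \<Longrightarrow> {..<M} = insert 0 {1..<M::nat}" by auto

lemma split_T: assumes "0 < Mt" "0 < Mr"
  shows "(\<Sum>k<Mt. blk N (bt Mt Mr k) (vz z) z) = XX N Mt Mr z + TT N Mt Mr (vz z) z"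
  unfolding lessThan_split[OF assms(1)] XX_def TT_def by (simp add: blk0[OF assms])

lemma split_R: assumes "0 < Mt" "0 < Mr"
  shows "(\<Sum>m<Mr. blk N (br Mt Mr m) (vz z) z) = XX N Mt Mr z + RR N Mt Mr (vz z) z"
proof -
  have "br Mt Mr 0 = bt Mt Mr 0" using bt0[OF assms] br0[OF assms] by (auto simp: fun_eq_iff)
  then show ?thesis
    unfolding lessThan_split[OF assms(2)] XX_def RR_def by (simp add: blk0[OF assms])
qed

lemma tx_phis: assumes "0 < Mt" "0 < Mr"
  shows "tx_gain d lam N Mt Mr \<theta> z (phis d lam N \<theta> z) = XX N Mt Mr z + TT N Mt Mr (vz z) z"
  unfolding tx_blk split_T[OF assms, symmetric]
  by (intro sum.cong refl blk_cong) (auto simp: uu_phis)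

lemma rx_phis: assumes "0 < Mt" "0 < Mr"
  shows "rx_gain d lam N Mt Mr \<theta> z (phis d lam N \<theta> z) = XX N Mt Mr z + RR N Mt Mr (vz z) z"
  unfolding rx_blk split_R[OF assms, symmetric]
  by (intro sum.cong refl blk_cong) (auto simp: uu_phis)

lemma XX_nonneg: "0 \<le> XX N Mt Mr z" by (simp add: XX_def)
lemma TT_nonneg: "0 \<le> TT N Mt Mr w z" by (simp add: TT_def sum_nonneg blk_nonneg)
lemma RR_nonneg: "0 \<le> RR N Mt Mr w z" by (simp add: RR_def sum_nonneg blk_nonneg)

lemma lower_F:
  assumes N: "0 < N" and Mt: "0 < Mt" and Mr: "0 < Mr"
  defines "I \<equiv> chan_index N Mt Mr"
    and "F \<equiv> \<lambda>z. (XX N Mt Mr z + TT N Mt Mr (vz z) z) * (XX N Mt Mr z + RR N Mt Mr (vz z) z)"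
  shows "integrable (PM I) F \<and>
    real N ^ 2 * (real Mt + (real N - 1) * m1\<^sup>2) * (real Mr + (real N - 1) * m1\<^sup>2) \<le> integral\<^sup>L (PM I) F"
proof -
  define J0 where "J0 = bt Mt Mr 0 ` {..<N}"
  define K' where "K' = I - J0"
  have inJ0: "bt Mt Mr 0 n \<in> J0" if "n < N" for n using that by (simp add: J0_def)
  have J0I: "J0 \<subseteq> I" using bt_sub[OF Mt] by (simp add: J0_def I_def)
  have IJ: "J0 \<union> K' = I" using J0I by (auto simp: K'_def)
  have dj: "J0 \<inter> K' = {}" by (auto simp: K'_def)
  have finI: "finite I" by (simp add: I_def fin_I)
  have finJ0: "finite J0" by (simp add: J0_def)
  have finK: "finite K'" using finI by (simp add: K'_def)
  have notJ0t: "bt Mt Mr k n \<notin> J0" if "1 \<le> k" for k n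
    using that Mt Mr by (auto simp: J0_def bt_def split: if_splits)
  have notJ0r: "br Mt Mr m n \<notin> J0" if "1 \<le> m" for m n
    using that Mt Mr by (auto simp: J0_def bt_def br_def split: if_splits)
  have subt: "bt Mt Mr k ` {..<N} \<subseteq> K'" if "k \<in> {1..<Mt}" for k
    using that bt_in[of k Mt _ N Mr] notJ0t by (auto simp: K'_def I_def)
  have subr: "br Mt Mr m ` {..<N} \<subseteq> K'" if "m \<in> {1..<Mr}" for m
    using that br_in[of m Mr _ N Mt] notJ0r by (auto simp: K'_def I_def)
  have Fm: "F \<in> borel_measurable (PM I)"
    unfolding F_def XX_def TT_def RR_def blk_def Sabs_def vz_def ph_def by measurable
  have Fint: "integrable (PM I) F"
  proof (rule INT[OF finI Fm, where C = "(real Mt * real N ^ 2) * (real Mr * real N ^ 2)"])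
    fix z
    have t: "XX N Mt Mr z + TT N Mt Mr (vz z) z \<le> real Mt * (real N ^ 2 * Q2 I z)"
      unfolding split_T[OF Mt Mr, symmetric] I_def by (rule sum_blk_bound[OF fin_I bt_sub vz_norm])
    have r: "XX N Mt Mr z + RR N Mt Mr (vz z) z \<le> real Mr * (real N ^ 2 * Q2 I z)"
      unfolding split_R[OF Mt Mr, symmetric] I_def by (rule sum_blk_bound[OF fin_I br_sub vz_norm])
    have nn: "0 \<le> XX N Mt Mr z + TT N Mt Mr (vz z) z" "0 \<le> XX N Mt Mr z + RR N Mt Mr (vz z) z"
      by (simp_all add: XX_nonneg TT_nonneg RR_nonneg)
    have "\<bar>F z\<bar> = F z" using nn by (simp add: F_def)
    also have "F z \<le> (real Mt * (real N ^ 2 * Q2 I z)) * (real Mr * (real N ^ 2 * Q2 I z))"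
      unfolding F_def by (rule mult_mono[OF t r]) (use nn Q2_nonneg[of I z] in simp_all)
    also have "\<dots> = (real Mt * real N ^ 2) * (real Mr * real N ^ 2) * (Q2 I z)\<^sup>2"
      by (simp add: power2_eq_square algebra_simps)
    finally show "\<bar>F z\<bar> \<le> (real Mt * real N ^ 2) * (real Mr * real N ^ 2) * (Q2 I z)\<^sup>2" .
  qed
  interpret PS: product_sigma_finite "\<lambda>_::idx. cgauss"
    by standard
  have fold: "integral\<^sup>L (PM I) F = (\<integral>x. (\<integral>y. F (merge J0 K' (x, y)) \<partial>PM K') \<partial>PM J0)"
    using PS.product_integral_fold[OF dj finJ0 finK, of F] Fint IJ by simp
  interpret P1: prob_space "PM J0" by (rule PM_prob)
  interpret P2: prob_space "PM K'" by (rule PM_prob)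
  interpret PP: pair_prob_space "PM J0" "PM K'" ..
  have intpair: "integrable (PM J0 \<Otimes>\<^sub>M PM K') (\<lambda>p. F (merge J0 K' p))"
    by (rule integrable_distr[OF measurable_merge]) (use PS.distr_merge[OF dj finJ0 finK] Fint in \<open>simp only: IJ\<close>)
  have intin: "integrable (PM J0) (\<lambda>x. \<integral>y. F (merge J0 K' (x, y)) \<partial>PM K')"
    using PP.integrable_fst'[OF intpair] by simp
  define p where "p = (real Mt - 1) * real N"
  define q where "q = (real Mr - 1) * real N"
  have inb: "(XX N Mt Mr x + p) * (XX N Mt Mr x + q) \<le> (\<integral>y. F (merge J0 K' (x, y)) \<partial>PM K')" for x
  proof -
    have mJ: "merge J0 K' (x, y) i = x i" if "i \<in> J0" for y i using that by (simp add: merge_def)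
    have mK: "merge J0 K' (x, y) i = y i" if "i \<in> K'" for y i using that dj by (auto simp: merge_def)
    have XXm: "XX N Mt Mr (merge J0 K' (x, y)) = XX N Mt Mr x" for y
      unfolding XX_def Sabs_def
      by (intro arg_cong[where f = "\<lambda>s. s\<^sup>2"] sum.cong refl) (auto simp: mJ inJ0)
    have vzm: "vz (merge J0 K' (x, y)) n = vz x n" if "n < N" for y n
    proof -
      have "(0, n, 0) \<in> J0" using that bt0[OF Mt Mr, of n] unfolding J0_def by (metis image_eqI lessThan_iff)
      then show ?thesis by (simp add: vz_def mJ)
    qed
    have TTm: "TT N Mt Mr (vz (merge J0 K' (x, y))) (merge J0 K' (x, y)) = TT N Mt Mr (vz x) y" for y
      unfolding TT_def
    proof (intro sum.cong refl blk_cong)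
      fix k n assume "k \<in> {1..<Mt}" "n < N"
      then show "merge J0 K' (x, y) (bt Mt Mr k n) = y (bt Mt Mr k n)" using subt by (intro mK) blast
    qed (simp add: vzm)
    have RRm: "RR N Mt Mr (vz (merge J0 K' (x, y))) (merge J0 K' (x, y)) = RR N Mt Mr (vz x) y" for y
      unfolding RR_def
    proof (intro sum.cong refl blk_cong)
      fix m n assume "m \<in> {1..<Mr}" "n < N"
      then show "merge J0 K' (x, y) (br Mt Mr m n) = y (br Mt Mr m n)" using subr by (intro mK) blast
    qed (simp add: vzm)
    have e: "(\<lambda>y. F (merge J0 K' (x, y))) =
       (\<lambda>y. (XX N Mt Mr x + (\<Sum>k\<in>{1..<Mt}. blk N (bt Mt Mr k) (vz x) y)) *
            (XX N Mt Mr x + (\<Sum>m\<in>{1..<Mr}. blk N (br Mt Mr m) (vz x) y)))"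
      unfolding F_def XXm TTm RRm by (simp add: TT_def RR_def)
    have "integrable (PM K') (\<lambda>y. (XX N Mt Mr x + (\<Sum>k\<in>{1..<Mt}. blk N (bt Mt Mr k) (vz x) y)) *
            (XX N Mt Mr x + (\<Sum>m\<in>{1..<Mr}. blk N (br Mt Mr m) (vz x) y))) \<and>
      (XX N Mt Mr x + real (card {1..<Mt}) * real N) * (XX N Mt Mr x + real (card {1..<Mr}) * real N) \<le>
      (\<integral>y. (XX N Mt Mr x + (\<Sum>k\<in>{1..<Mt}. blk N (bt Mt Mr k) (vz x) y)) *
            (XX N Mt Mr x + (\<Sum>m\<in>{1..<Mr}. blk N (br Mt Mr m) (vz x) y)) \<partial>PM K')"
      by (rule inner[OF finK N]) (auto simp: bt_inj br_inj subt subr bt_rel vz_norm XX_nonneg)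
    then show ?thesis unfolding e using Mt Mr by (simp add: of_nat_diff p_def q_def)
  qed
  have ES: "integrable (PM J0) (XX N Mt Mr) \<and> integral\<^sup>L (PM J0) (XX N Mt Mr) = real N * (1 + (real N - 1) * m1\<^sup>2)"
    using E_S2[OF finJ0 bt_inj, of Mt Mr 0] by (simp add: XX_def[abs_def] J0_def)
  have XX2: "integrable (PM J0) (\<lambda>x. (XX N Mt Mr x)\<^sup>2)"
  proof (rule INT[OF finJ0, where C = "real N ^ 4"])
    show "(\<lambda>x. (XX N Mt Mr x)\<^sup>2) \<in> borel_measurable (PM J0)" unfolding XX_def by measurable
    fix x
    have b: "XX N Mt Mr x \<le> real N ^ 2 * Q2 J0 x"
      unfolding XX_def by (rule Sabs_le[OF finJ0]) (simp add: J0_def)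
    have "\<bar>(XX N Mt Mr x)\<^sup>2\<bar> = (XX N Mt Mr x)\<^sup>2" by simp
    also have "\<dots> \<le> (real N ^ 2 * Q2 J0 x)\<^sup>2" by (rule power_mono[OF b XX_nonneg])
    also have "\<dots> = real N ^ 4 * (Q2 J0 x)\<^sup>2" by (simp add: power_mult_distrib power_mult[symmetric])
    finally show "\<bar>(XX N Mt Mr x)\<^sup>2\<bar> \<le> real N ^ 4 * (Q2 J0 x)\<^sup>2" .
  qed
  have jen: "(integral\<^sup>L (PM J0) (XX N Mt Mr))\<^sup>2 \<le> integral\<^sup>L (PM J0) (\<lambda>x. (XX N Mt Mr x)\<^sup>2)"
    by (rule jensen_sq[OF PM_prob]) (use ES XX2 in auto)
  have e2: "(\<lambda>x. (XX N Mt Mr x + p) * (XX N Mt Mr x + q)) = (\<lambda>x. (XX N Mt Mr x)\<^sup>2 + (p + q) * XX N Mt Mr x + p * q)"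
    by (auto simp: power2_eq_square algebra_simps fun_eq_iff)
  have lowint: "integrable (PM J0) (\<lambda>x. (XX N Mt Mr x + p) * (XX N Mt Mr x + q))"
    unfolding e2 using XX2 ES by simp
  have lowval: "integral\<^sup>L (PM J0) (\<lambda>x. (XX N Mt Mr x + p) * (XX N Mt Mr x + q)) =
     integral\<^sup>L (PM J0) (\<lambda>x. (XX N Mt Mr x)\<^sup>2) + (p + q) * integral\<^sup>L (PM J0) (XX N Mt Mr) + p * q"
    unfolding e2 using XX2 ES by (simp add: P1.prob_space)
  have "integral\<^sup>L (PM J0) (\<lambda>x. (XX N Mt Mr x + p) * (XX N Mt Mr x + q)) \<le> integral\<^sup>L (PM I) F"
    unfolding fold by (rule integral_mono[OF lowint intin inb])
  moreover have "real N ^ 2 * (real Mt + (real N - 1) * m1\<^sup>2) * (real Mr + (real N - 1) * m1\<^sup>2) \<le>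
      integral\<^sup>L (PM J0) (\<lambda>x. (XX N Mt Mr x + p) * (XX N Mt Mr x + q))"
  proof -
    have pq: "0 \<le> p + q" using Mt Mr by (simp add: p_def q_def)
    have "real N ^ 2 * (real Mt + (real N - 1) * m1\<^sup>2) * (real Mr + (real N - 1) * m1\<^sup>2) =
      (integral\<^sup>L (PM J0) (XX N Mt Mr))\<^sup>2 + (p + q) * integral\<^sup>L (PM J0) (XX N Mt Mr) + p * q"
      unfolding conjunct2[OF ES] by (simp add: p_def q_def power2_eq_square algebra_simps)
    also have "\<dots> \<le> integral\<^sup>L (PM J0) (\<lambda>x. (XX N Mt Mr x)\<^sup>2) + (p + q) * integral\<^sup>L (PM J0) (XX N Mt Mr) + p * q"
      using jen by simp
    finally show ?thesis using lowval by simp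
  qed
  ultimately show ?thesis using Fint by simp
qed

theorem theorem2:
  fixes d lam P0 \<sigma>2 L \<theta> :: real and \<alpha> :: complex and N Mt Mr :: nat
  assumes "d > 0" and "lam > 0"
    and "N > 0" and "even N" and "Mt > 0" and "Mr > 0"
    and "P0 > 0" and "\<sigma>2 > 0" and "\<alpha> \<noteq> 0" and "L > 0"
    and "real N > 2 / pi * sqrt ((real Mt + real Mr)\<^sup>2
            + 4 * (real Mt * real Mr / L - real (min Mt Mr) * real (max Mt Mr)))
          - 2 * (real Mt + real Mr) / pi + 1"
  shows "avg_snr_fully_passive d lam N Mt Mr P0 \<sigma>2 \<alpha> L \<theta>
         > avg_snr_semi_passive d lam N Mt Mr P0 \<sigma>2 \<alpha> L \<theta>"
proof -
  note N = \<open>N > 0\<close> and Mt = \<open>Mt > 0\<close> and Mr = \<open>Mr > 0\<close> and L = \<open>L > 0\<close>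
  define I where "I = chan_index N Mt Mr"
  have M: "chan_measure N Mt Mr = PM I" by (simp add: chan_measure_def I_def)
  have finI: "finite I" by (simp add: I_def fin_I)
  define k0 where "k0 = P0 * (cmod \<alpha>)\<^sup>2 / \<sigma>2"
  have k0: "0 < k0" using assms by (simp add: k0_def)
  define tx where "tx = tx_gain d lam N Mt Mr \<theta>"
  define rx where "rx = rx_gain d lam N Mt Mr \<theta>"
  define G where "G = (\<lambda>z \<phi>. P0 * (cmod \<alpha>)\<^sup>2 * L\<^sup>2 * tx z \<phi> * rx z \<phi> / \<sigma>2)"
  define H where "H = (\<lambda>z \<phi>. P0 * (cmod \<alpha>)\<^sup>2 * L * real Mr * tx z \<phi> / \<sigma>2)"
  have S1: "avg_snr_fully_passive d lam N Mt Mr P0 \<sigma>2 \<alpha> L \<theta> = integral\<^sup>L (PM I) (\<lambda>z. SUP \<phi>. G z \<phi>)"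
    by (simp add: avg_snr_fully_passive_def M G_def tx_def rx_def)
  have S2: "avg_snr_semi_passive d lam N Mt Mr P0 \<sigma>2 \<alpha> L \<theta> = integral\<^sup>L (PM I) (\<lambda>z. SUP \<phi>. H z \<phi>)"
    by (simp add: avg_snr_semi_passive_def M H_def tx_def)
  have Geq: "G z \<phi> = k0 * L\<^sup>2 * (tx z \<phi> * rx z \<phi>)" for z \<phi> by (simp add: G_def k0_def)
  have Heq: "H z \<phi> = k0 * L * real Mr * tx z \<phi>" for z \<phi> by (simp add: H_def k0_def)
  have txb: "tx z \<phi> \<le> real Mt * (real N ^ 2 * Q2 I z)" for z \<phi> unfolding tx_def I_def by (rule tx_bound)
  have rxb: "rx z \<phi> \<le> real Mr * (real N ^ 2 * Q2 I z)" for z \<phi> unfolding rx_def I_def by (rule rx_bound)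
  have txn: "0 \<le> tx z \<phi>" for z \<phi> unfolding tx_def by (rule tx_nonneg)
  have rxn: "0 \<le> rx z \<phi>" for z \<phi> unfolding rx_def by (rule rx_nonneg)
  define BG where "BG = (\<lambda>z. k0 * L\<^sup>2 * ((real Mt * (real N ^ 2 * Q2 I z)) * (real Mr * (real N ^ 2 * Q2 I z))))"
  have Gb: "G z \<phi> \<le> BG z" for z \<phi>
    unfolding Geq BG_def using k0
    by (intro mult_left_mono mult_mono txb rxb) (auto intro: txn rxn order_trans[OF txn txb])
  have Gn: "0 \<le> G z \<phi>" for z \<phi> unfolding Geq using k0 txn rxn by simp
  have Gbdd: "bdd_above (range (G z))" for z using Gb by (intro bdd_aboveI2) auto
  have Gsup_nn: "0 \<le> (SUP \<phi>. G z \<phi>)" for z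
    using Gn[of z "\<lambda>_. 0"] cSUP_upper[OF UNIV_I Gbdd[of z], of "\<lambda>_. 0"] by linarith
  have Gsup_le: "(SUP \<phi>. G z \<phi>) \<le> BG z" for z by (rule cSUP_least) (auto intro: Gb)
  have Gm: "(\<lambda>z. SUP \<phi>. G z \<phi>) \<in> borel_measurable (PM I)"
  proof (rule SUP_meas)
    show "(\<lambda>z. G z \<phi>) \<in> borel_measurable (PM I)" for \<phi> unfolding G_def tx_def rx_def by measurable
    show "continuous_on UNIV (G z)" for z
      unfolding G_def[abs_def] tx_def rx_def by (intro continuous_intros tx_cont rx_cont) (use assms(8) in simp)
  qed (rule Gbdd)
  have Gint: "integrable (PM I) (\<lambda>z. SUP \<phi>. G z \<phi>)"
  proof (rule INT[OF finI Gm, where C = "k0 * L\<^sup>2 * (real Mt * real N ^ 2) * (real Mr * real N ^ 2)"])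
    fix z
    have "\<bar>SUP \<phi>. G z \<phi>\<bar> \<le> BG z" using Gsup_nn[of z] Gsup_le[of z] by simp
    also have "BG z = k0 * L\<^sup>2 * (real Mt * real N ^ 2) * (real Mr * real N ^ 2) * (Q2 I z)\<^sup>2"
      by (simp add: BG_def power2_eq_square algebra_simps)
    finally show "\<bar>SUP \<phi>. G z \<phi>\<bar> \<le> k0 * L\<^sup>2 * (real Mt * real N ^ 2) * (real Mr * real N ^ 2) * (Q2 I z)\<^sup>2" .
  qed
  define F where "F = (\<lambda>z. (XX N Mt Mr z + TT N Mt Mr (vz z) z) * (XX N Mt Mr z + RR N Mt Mr (vz z) z))"
  have LF: "integrable (PM I) F \<and>
    real N ^ 2 * (real Mt + (real N - 1) * m1\<^sup>2) * (real Mr + (real N - 1) * m1\<^sup>2) \<le> integral\<^sup>L (PM I) F"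
    unfolding F_def I_def by (rule lower_F[OF N Mt Mr])
  have GF: "k0 * L\<^sup>2 * F z \<le> (SUP \<phi>. G z \<phi>)" for z
  proof -
    have "k0 * L\<^sup>2 * F z = G z (phis d lam N \<theta> z)"
      unfolding Geq F_def tx_def rx_def tx_phis[OF Mt Mr] rx_phis[OF Mt Mr] ..
    also have "\<dots> \<le> (SUP \<phi>. G z \<phi>)" by (rule cSUP_upper[OF UNIV_I Gbdd])
    finally show ?thesis .
  qed
  define b where "b = (real N - 1) * m1\<^sup>2"
  have low: "k0 * L\<^sup>2 * (real N ^ 2 * (real Mt + b) * (real Mr + b)) \<le> integral\<^sup>L (PM I) (\<lambda>z. SUP \<phi>. G z \<phi>)"
  proof -
    have "k0 * L\<^sup>2 * (real N ^ 2 * (real Mt + b) * (real Mr + b)) \<le> k0 * L\<^sup>2 * integral\<^sup>L (PM I) F"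
      using LF k0 unfolding b_def by (intro mult_left_mono) auto
    also have "\<dots> = integral\<^sup>L (PM I) (\<lambda>z. k0 * L\<^sup>2 * F z)" using LF by simp
    also have "\<dots> \<le> integral\<^sup>L (PM I) (\<lambda>z. SUP \<phi>. G z \<phi>)"
      by (rule integral_mono[OF _ Gint GF]) (use LF in simp)
    finally show ?thesis .
  qed
  define U where "U = (\<lambda>z. \<Sum>k<Mt. (Sabs N (bt Mt Mr k) z)\<^sup>2)"
  have Uint: "integrable (PM I) U \<and> integral\<^sup>L (PM I) U = real Mt * (real N * (1 + b))"
  proof -
    have e: "\<And>k. k < Mt \<Longrightarrow> integrable (PM I) (\<lambda>z. (Sabs N (bt Mt Mr k) z)\<^sup>2) \<and>
        integral\<^sup>L (PM I) (\<lambda>z. (Sabs N (bt Mt Mr k) z)\<^sup>2) = real N * (1 + b)"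
      unfolding b_def I_def by (rule E_S2[OF fin_I bt_inj bt_sub])
    have i: "integrable (PM I) U" unfolding U_def using e by (intro Bochner_Integration.integrable_sum) auto
    have "integral\<^sup>L (PM I) U = (\<Sum>k<Mt. integral\<^sup>L (PM I) (\<lambda>z. (Sabs N (bt Mt Mr k) z)\<^sup>2))"
      unfolding U_def by (rule Bochner_Integration.integral_sum) (use e in auto)
    also have "\<dots> = (\<Sum>k<Mt. real N * (1 + b))" using e by (intro sum.cong) auto
    finally show ?thesis using i by simp
  qed
  have HU: "(SUP \<phi>. H z \<phi>) \<le> k0 * L * real Mr * U z" for z
  proof (rule cSUP_least)
    fix \<phi>
    have "tx z \<phi> \<le> U z"
      unfolding tx_def tx_blk U_def by (intro sum_mono blk_le_Sabs uu_norm)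
    then show "H z \<phi> \<le> k0 * L * real Mr * U z" unfolding Heq using k0 L by (intro mult_left_mono) auto
  qed simp
  have Un: "0 \<le> U z" for z by (simp add: U_def sum_nonneg)
  have up: "integral\<^sup>L (PM I) (\<lambda>z. SUP \<phi>. H z \<phi>) \<le> k0 * L * real Mr * (real Mt * (real N * (1 + b)))"
  proof (cases "integrable (PM I) (\<lambda>z. SUP \<phi>. H z \<phi>)")
    case True
    have "integral\<^sup>L (PM I) (\<lambda>z. SUP \<phi>. H z \<phi>) \<le> integral\<^sup>L (PM I) (\<lambda>z. k0 * L * real Mr * U z)"
      by (rule integral_mono[OF True _ HU]) (use Uint in simp)
    also have "\<dots> = k0 * L * real Mr * (real Mt * (real N * (1 + b)))" using Uint by simp
    finally show ?thesis .
  next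
    case False
    then have "integral\<^sup>L (PM I) (\<lambda>z. SUP \<phi>. H z \<phi>) = 0" by (rule not_integrable_integral_eq)
    moreover have "0 \<le> k0 * L * real Mr * (real Mt * (real N * (1 + b)))"
      using k0 L m1_nonneg N unfolding b_def by simp
    ultimately show ?thesis by simp
  qed
  have KK: "real (min Mt Mr) * real (max Mt Mr) = real Mt * real Mr"
    by (cases "Mt \<le> Mr") (auto simp: min_def max_def mult.commute)
  have h1: "real Mt * real Mr < L * (real Mt + pi * (real N - 1) / 4) * (real Mr + pi * (real N - 1) / 4)"
    by (rule hyp_transform[OF _ _ _ L KK]) (use assms in auto)
  have h2: "real Mt * real Mr * (1 + b) < L * real N * (real Mt + b) * (real Mr + b)"
    unfolding b_def by (rule key_main[OF _ _ _ L m1_lower m1_upper h1]) (use N Mt Mr in auto)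
  have "k0 * L * real Mr * (real Mt * (real N * (1 + b))) = (k0 * L * real N) * (real Mt * real Mr * (1 + b))"
    by (simp add: algebra_simps)
  also have "\<dots> < (k0 * L * real N) * (L * real N * (real Mt + b) * (real Mr + b))"
    using k0 L N h2 by (intro mult_strict_left_mono) auto
  also have "\<dots> = k0 * L\<^sup>2 * (real N ^ 2 * (real Mt + b) * (real Mr + b))"
    by (simp add: power2_eq_square algebra_simps)
  finally have "k0 * L * real Mr * (real Mt * (real N * (1 + b))) < k0 * L\<^sup>2 * (real N ^ 2 * (real Mt + b) * (real Mr + b))" .
  then show ?thesis unfolding S1 S2 using low up by linarith
qed

end
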